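(* Fix $\boldsymbol\beta=(\beta_1,\dots,\beta_N)\in(0,\infty)^N$, $v\in\mathbb R$ with $\beta_i+v>0$ for all $i$, and $\mathbf L_1'\in\mathbb R^N$; write $\min(\boldsymbol\beta)=\min_i\beta_i$. Then both functions $$u\mapsto\int_{\mathbb R^N}\mathbf U^{\boldsymbol\beta,u,v}(\mathbf L_1'|\mathbf L_1)\,\mathrm P^{\boldsymbol\beta,u,v}_{\mathrm{stat\,LG}}(\mathbf L_1)\,d\mathbf L_1\qquad\text{and}\qquad u\mapsto\mathrm P^{\tau_1\boldsymbol\beta,u,v}_{\mathrm{stat\,LG}}(\mathbf L_1')$$ are real analytic on $(-\min(\boldsymbol\beta),\infty)$, where $\tau_1\boldsymbol\beta=(\beta_2,\dots,\beta_N,\beta_1)$.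
   Context: $\mathbf U^{\boldsymbol\beta,u,v}(\mathbf L_1'|\mathbf L_1)$ is the transition probability density of the following one-step update: set $h(j,0)=L_1(j)$ for $0\le j\le N$ (with $L_1(0)=0$) and $z=e^h$; with independent weights $\varpi_{1,1}\sim\Gamma^{-1}(\beta_1+u)$, $\varpi_{1+j,1}\sim\Gamma^{-1}(\beta_1+\beta_{j+1})$ for $1\le j\le N-1$, $\varpi_{N+1,1}\sim\Gamma^{-1}(\beta_1+v)$, define $z(1,1)=\varpi_{1,1}z(1,0)$, $z(1+j,1)=\varpi_{1+j,1}(z(j,1)+z(1+j,0))$ for $1\le j\le N-1$ successively, $z(N+1,1)=\varpi_{N+1,1}z(N,1)$, and $L_1'(j)=\log z(1+j,1)-\log z(1,1)$, $1\le j\le N$. Here $\Gamma^{-1}(\theta)$ has density $x^{-\theta-1}e^{-1/x}/\Gamma(\theta)$ on $(0,\infty)$. $\mathrm P^{\boldsymbol\beta,u,v}_{\mathrm{stat\,LG}}$ is the marginal density of $\mathbf L_1$ under $\mathbb P^{\boldsymbol\beta,u,v}_{\mathrm{stat\,LG}}(\mathbf L)=V(\mathbf L)\mathbb P^{\boldsymbol\beta,\boldsymbol\beta}_{\mathrm{LGRW}}(\mathbf L)/\mathbb E^{\boldsymbol\beta,\boldsymbol\beta}_{\mathrm{LGRW}}[V]$, where $\mathbb P^{\boldsymbol\beta,\boldsymbol\beta}_{\mathrm{LGRW}}$ is the density of two independent walks $\mathbf L_1,\mathbf L_2\in\mathbb R^N$ with $L_i(0)=0$ and independent increments $L_i(j)-L_i(j-1)$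 of density $e^{-\beta_jy-e^{-y}}/\Gamma(\beta_j)$, and $V(\mathbf L)=\big(\sum_{j=1}^Ne^{L_2(j)-L_1(j-1)}\big)^{-(u+v)}e^{-v(L_1(N)-L_2(N))}$ (the normalizing expectation is finite whenever $\beta_i+u>0$, $\beta_i+v>0$). *)

theory Defs
  imports "HOL-Analysis.Analysis"
begin

definition real_analytic_on :: "(real \<Rightarrow> real) \<Rightarrow> real set \<Rightarrow> bool" where
  "real_analytic_on f S \<longleftrightarrow>
     (\<forall>x\<in>S. \<exists>r>0. \<exists>a::nat \<Rightarrow> real.
        \<forall>y. \<bar>y - x\<bar> < r \<longrightarrow> (\<lambda>n. a n * (y - x) ^ n) sums f y)"

text \<open>Vectors in R^N are functions nat => real, coordinates 1..N;
  Lebesgue measure on R^N.\<close>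
definition RN :: "nat \<Rightarrow> (nat \<Rightarrow> real) measure" where
  "RN N = PiM {1..N} (\<lambda>_. lborel)"

definition ext0 :: "(nat \<Rightarrow> real) \<Rightarrow> nat \<Rightarrow> real" where
  "ext0 L j = (if j = 0 then 0 else L j)"

definition invgamma_dens :: "real \<Rightarrow> real \<Rightarrow> real" where
  "invgamma_dens \<theta> x = (if x > 0 then x powr (-\<theta> - 1) * exp (-1 / x) / Gamma \<theta> else 0)"

definition lg_incr_dens :: "real \<Rightarrow> real \<Rightarrow> real" where
  "lg_incr_dens b y = exp (- b * y - exp (- y)) / Gamma b"

text \<open>Density (w.r.t. Lebesgue measure on the positions L(1..N)) of one walk.\<close>
definition lgrw_dens :: "nat \<Rightarrow> (nat \<Rightarrow> real) \<Rightarrow> (nat \<Rightarrow> real) \<Rightarrow> real" where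
  "lgrw_dens N \<beta> L = (\<Prod>j=1..N. lg_incr_dens (\<beta> j) (ext0 L j - ext0 L (j - 1)))"

definition Vfun :: "nat \<Rightarrow> real \<Rightarrow> real \<Rightarrow> (nat \<Rightarrow> real) \<Rightarrow> (nat \<Rightarrow> real) \<Rightarrow> real" where
  "Vfun N u v L1 L2 =
     (\<Sum>j=1..N. exp (ext0 L2 j - ext0 L1 (j - 1))) powr (- (u + v))
     * exp (- v * (ext0 L1 N - ext0 L2 N))"

definition statLG_norm :: "nat \<Rightarrow> (nat \<Rightarrow> real) \<Rightarrow> real \<Rightarrow> real \<Rightarrow> real" where
  "statLG_norm N \<beta> u v =
     (\<integral>L1. (\<integral>L2. Vfun N u v L1 L2 * lgrw_dens N \<beta> L1 * lgrw_dens N \<beta> L2 \<partial>RN N) \<partial>RN N)"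

definition statLG_marg :: "nat \<Rightarrow> (nat \<Rightarrow> real) \<Rightarrow> real \<Rightarrow> real \<Rightarrow> (nat \<Rightarrow> real) \<Rightarrow> real" where
  "statLG_marg N \<beta> u v L1 =
     (\<integral>L2. Vfun N u v L1 L2 * lgrw_dens N \<beta> L1 * lgrw_dens N \<beta> L2 \<partial>RN N) / statLG_norm N \<beta> u v"

text \<open>Transition density U(L'|L) of the one-step update, obtained by conditioning on
  w = varpi_{1,1} and the triangular change of variables
  varpi_{1+j,1} = exp(L'(j)) / c_j, with
  c_j = exp(L'(j-1)) + exp(L(1+j)) / (w exp(L(1)))  (1 <= j <= N-1),  c_N = exp(L'(N-1)),
  whose inverse Jacobian is prod_j varpi_{1+j,1}.\<close>
definition U_theta :: "nat \<Rightarrow> (nat \<Rightarrow> real) \<Rightarrow> real \<Rightarrow> nat \<Rightarrow> real" where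
  "U_theta N \<beta> v j = (if j < N then \<beta> 1 + \<beta> (j + 1) else \<beta> 1 + v)"

definition U_c :: "nat \<Rightarrow> (nat \<Rightarrow> real) \<Rightarrow> (nat \<Rightarrow> real) \<Rightarrow> real \<Rightarrow> nat \<Rightarrow> real" where
  "U_c N L' L w j =
     (if j < N then exp (ext0 L' (j - 1)) + exp (L (j + 1)) / (w * exp (L 1))
      else exp (ext0 L' (j - 1)))"

definition U_trans :: "nat \<Rightarrow> (nat \<Rightarrow> real) \<Rightarrow> real \<Rightarrow> real \<Rightarrow> (nat \<Rightarrow> real) \<Rightarrow> (nat \<Rightarrow> real) \<Rightarrow> real" where
  "U_trans N \<beta> u v L' L =
     (\<integral>w. invgamma_dens (\<beta> 1 + u) w *
        (\<Prod>j=1..N. invgamma_dens (U_theta N \<beta> v j) (exp (L' j) / U_c N L' L w j)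
                     * (exp (L' j) / U_c N L' L w j)) \<partial>lborel)"

definition tau1 :: "nat \<Rightarrow> (nat \<Rightarrow> real) \<Rightarrow> nat \<Rightarrow> real" where
  "tau1 N \<beta> i = (if i < N then \<beta> (i + 1) else \<beta> 1)"

end

theory Submission
  imports Defs "HOL-Complex_Analysis.Complex_Analysis" "HOL-Real_Asymp.Real_Asymp"
begin
lemma Re_mult_of_real_right: "Re (c * complex_of_real t) = Re c * t"
  by simp

definition cra :: "(real \<Rightarrow> real) \<Rightarrow> real \<Rightarrow> bool" where
  "cra f x \<longleftrightarrow> (\<exists>r>0. \<exists>F. F holomorphic_on ball (complex_of_real x) r \<and>
      (\<forall>y. \<bar>y - x\<bar> < r \<longrightarrow> F (complex_of_real y) = complex_of_real (f y)))"

lemma cra_real_analytic: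
  assumes "\<And>x. x \<in> S \<Longrightarrow> cra f x"
  shows "real_analytic_on f S"
  unfolding real_analytic_on_def
proof
  fix x assume "x \<in> S"
  then obtain r F where r: "r > 0" and hol: "F holomorphic_on ball (complex_of_real x) r"
    and eq: "\<And>y. \<bar>y - x\<bar> < r \<Longrightarrow> F (complex_of_real y) = complex_of_real (f y)"
    using assms unfolding cra_def by blast
  define a where "a n = Re ((deriv ^^ n) F (complex_of_real x) / fact n)" for n
  have "(\<lambda>n. a n * (y - x) ^ n) sums f y" if y: "\<bar>y - x\<bar> < r" for y
  proof -
    have "complex_of_real y \<in> ball (complex_of_real x) r"
      using y by (simp add: dist_norm norm_minus_commute flip: of_real_diff)
    from holomorphic_power_series[OF hol this]
    have "(\<lambda>n. (deriv ^^ n) F (complex_of_real x) / fact n * (complex_of_real y - complex_of_real x) ^ n) sums F (complex_of_real y)" .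
    from sums_Re[OF this] have "(\<lambda>n. Re ((deriv ^^ n) F (complex_of_real x) / fact n * complex_of_real ((y - x) ^ n))) sums f y"
      by (simp add: eq[OF y] flip: of_real_diff of_real_power)
    moreover have "Re ((deriv ^^ n) F (complex_of_real x) / fact n * complex_of_real ((y - x) ^ n)) = a n * (y - x) ^ n" for n
      unfolding a_def by (simp only: Re_mult_of_real_right)
    ultimately show ?thesis by simp
  qed
  with r show "\<exists>r>0. \<exists>a. \<forall>y. \<bar>y - x\<bar> < r \<longrightarrow> (\<lambda>n. a n * (y - x) ^ n) sums f y" by blast
qed

lemma cra_cong:
  assumes "cra g x" "d > 0" "\<And>y. \<bar>y - x\<bar> < d \<Longrightarrow> f y = g y"
  shows "cra f x"
proof -
  obtain r F where r: "r > 0" and hol: "F holomorphic_on ball (complex_of_real x) r"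
    and eq: "\<And>y. \<bar>y - x\<bar> < r \<Longrightarrow> F (complex_of_real y) = complex_of_real (g y)"
    using assms unfolding cra_def by blast
  show ?thesis unfolding cra_def
    apply (rule exI[of _ "min r d"])
    using r assms(2) hol eq assms(3)
    by (auto intro!: exI[of _ F] holomorphic_on_subset[OF hol])
qed

lemma cra_mult:
  assumes "cra f x" "cra g x"
  shows "cra (\<lambda>y. f y * g y) x"
proof -
  obtain r F where r: "r > 0" and hol: "F holomorphic_on ball (complex_of_real x) r"
    and eq: "\<And>y. \<bar>y - x\<bar> < r \<Longrightarrow> F (complex_of_real y) = complex_of_real (f y)"
    using assms unfolding cra_def by blast
  obtain s G where s: "s > 0" and holG: "G holomorphic_on ball (complex_of_real x) s"
    and eqG: "\<And>y. \<bar>y - x\<bar> < s \<Longrightarrow> G (complex_of_real y) = complex_of_real (g y)"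
    using assms unfolding cra_def by blast
  show ?thesis unfolding cra_def
    apply (rule exI[of _ "min r s"])
    using r s eq eqG
    by (auto intro!: exI[of _ "\<lambda>z. F z * G z"] holomorphic_on_mult
        holomorphic_on_subset[OF hol] holomorphic_on_subset[OF holG])
qed

lemma cra_divide:
  assumes "cra f x" "cra g x" "g x \<noteq> 0"
  shows "cra (\<lambda>y. f y / g y) x"
proof -
  obtain r F where r: "r > 0" and hol: "F holomorphic_on ball (complex_of_real x) r"
    and eq: "\<And>y. \<bar>y - x\<bar> < r \<Longrightarrow> F (complex_of_real y) = complex_of_real (f y)"
    using assms unfolding cra_def by blast
  obtain s G where s: "s > 0" and holG: "G holomorphic_on ball (complex_of_real x) s"
    and eqG: "\<And>y. \<bar>y - x\<bar> < s \<Longrightarrow> G (complex_of_real y) = complex_of_real (g y)"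
    using assms unfolding cra_def by blast
  have "G (complex_of_real x) \<noteq> 0" using eqG[of x] s assms(3) by simp
  moreover have "continuous_on (ball (complex_of_real x) s) G"
    by (rule holomorphic_on_imp_continuous_on[OF holG])
  then have "isCont G (complex_of_real x)"
    using continuous_on_interior[of "ball (complex_of_real x) s" G "complex_of_real x"] s by simp
  ultimately obtain t where t: "t > 0" and tG0: "\<And>z. dist (complex_of_real x) z < t \<Longrightarrow> G z \<noteq> 0"
    using continuous_at_avoid by metis
  have tG: "G z \<noteq> 0" if "z \<in> ball (complex_of_real x) t" for z using tG0 that by simp
  define q where "q = min r (min s t)"
  have q: "q > 0" using r s t by (simp add: q_def)
  have sub: "ball (complex_of_real x) q \<subseteq> ball (complex_of_real x) r"
    "ball (complex_of_real x) q \<subseteq> ball (complex_of_real x) s"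
    "ball (complex_of_real x) q \<subseteq> ball (complex_of_real x) t"
    by (auto simp: q_def)
  have "(\<lambda>z. F z / G z) holomorphic_on ball (complex_of_real x) q"
    apply (rule holomorphic_on_divide)
    apply (rule holomorphic_on_subset[OF hol sub(1)])
    apply (rule holomorphic_on_subset[OF holG sub(2)])
    using tG sub(3) by blast
  moreover have "(\<lambda>z. F z / G z) (complex_of_real y) = complex_of_real (f y / g y)" if "\<bar>y - x\<bar> < q" for y
    using that eq[of y] eqG[of y] by (simp add: q_def)
  ultimately show ?thesis unfolding cra_def
    using q by blast
qed

lemma cra_rGamma:
  "cra (\<lambda>u. rGamma (b + u)) x"
  unfolding cra_def
proof (intro exI[of _ 1] exI[of _ "\<lambda>z. rGamma (complex_of_real b + z)"] conjI allI impI)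
  show "(\<lambda>z. rGamma (complex_of_real b + z)) holomorphic_on ball (complex_of_real x) 1"
    by (intro holomorphic_intros)
  fix y :: real
  show "rGamma (complex_of_real b + complex_of_real y) = complex_of_real (rGamma (b + y))"
    by (simp only: of_real_add[symmetric] rGamma_complex_of_real)
qed simp

lemma exp_partial_le:
  fixes t :: real assumes "0 \<le> t"
  shows "(\<Sum>n<K. t ^ n / fact n) \<le> exp t"
proof -
  have s: "(\<lambda>n. t ^ n / fact n) sums exp t"
    using exp_converges[of t] by (simp add: divide_inverse mult.commute scaleR_conv_of_real)
  have "(\<Sum>n<K. t ^ n / fact n) \<le> suminf (\<lambda>n. t ^ n / fact n)"
    by (rule sum_le_suminf) (use s assms in \<open>auto simp: sums_iff\<close>)
  then show ?thesis using s by (simp add: sums_iff)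
qed

lemma exp_term_le:
  fixes t :: real assumes "0 \<le> t"
  shows "t ^ n / fact n \<le> exp t"
proof -
  have "t ^ n / fact n \<le> (\<Sum>k<Suc n. t ^ k / fact k)"
    using assms by (intro member_le_sum) auto
  also have "\<dots> \<le> exp t" by (rule exp_partial_le[OF assms])
  finally show ?thesis .
qed

lemma exp_abs_le: "exp (t * \<bar>b\<bar>) \<le> exp (r * b) + exp (- r * b)" if "0 \<le> t" "t \<le> r" for t r b :: real
proof (cases "b \<ge> 0")
  case True
  then have "exp (t * \<bar>b\<bar>) \<le> exp (r * b)" using that by (simp add: mult_right_mono)
  then show ?thesis by (smt (verit) exp_gt_zero)
next
  case False
  then have "exp (t * \<bar>b\<bar>) \<le> exp (- r * b)" using that by (simp add: mult_right_mono)
  then show ?thesis by (smt (verit) exp_gt_zero)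
qed

lemma cra_expfam:
  fixes M :: "'a measure" and h a :: "'a \<Rightarrow> real"
  assumes hm[measurable]: "h \<in> borel_measurable M" and am[measurable]: "a \<in> borel_measurable M"
    and hnn: "\<And>y. 0 \<le> h y"
    and fin: "\<And>u. c < u \<Longrightarrow> u < d \<Longrightarrow> (\<integral>\<^sup>+y. ennreal (h y * exp (- u * a y)) \<partial>M) < \<infinity>"
    and x: "c < x" "x < d"
  shows "cra (\<lambda>u. \<integral>y. h y * exp (- u * a y) \<partial>M) x"
proof -
  define \<rho> where "\<rho> = min (x - c) (d - x) / 2"
  have \<rho>: "0 < \<rho>" "c < x - \<rho>" "x + \<rho> < d" using x unfolding \<rho>_def by (auto simp: min_def field_simps)
  define g where "g y = h y * exp (- x * a y)" for y
  define w where "w y = h y * exp (- (x - \<rho>) * a y) + h y * exp (- (x + \<rho>) * a y)" for y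
  have gm[measurable]: "g \<in> borel_measurable M" unfolding g_def by measurable
  have gnn: "0 \<le> g y" for y using hnn by (simp add: g_def)
  have int1: "integrable M (\<lambda>y. h y * exp (- u * a y))" if "c < u" "u < d" for u
    by (rule integrableI_bounded) (use fin[OF that] hnn in \<open>auto simp: abs_mult\<close>)
  have wint: "integrable M w"
    unfolding w_def using int1[of "x - \<rho>"] int1[of "x + \<rho>"] \<rho> by auto
  have gw: "g y * exp (t * \<bar>a y\<bar>) \<le> w y" if "0 \<le> t" "t \<le> \<rho>" for y t
  proof -
    have "g y * exp (t * \<bar>a y\<bar>) \<le> g y * (exp (\<rho> * a y) + exp (- \<rho> * a y))"
      by (rule mult_left_mono[OF exp_abs_le[OF that] gnn])
    also have "\<dots> = w y"
      by (simp add: g_def w_def algebra_simps flip: exp_add)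
    finally show ?thesis .
  qed
  define cn where "cn n = (\<integral>y. g y * (- a y) ^ n / fact n \<partial>M)" for n
  have tint: "integrable M (\<lambda>y. g y * (- a y) ^ n / fact n)" for n
  proof (rule Bochner_Integration.integrable_bound[of _ "\<lambda>y. w y / \<rho> ^ n"])
    show "integrable M (\<lambda>y. w y / \<rho> ^ n)" using wint by auto
    show "(\<lambda>y. g y * (- a y) ^ n / fact n) \<in> borel_measurable M" by measurable
    show "AE y in M. norm (g y * (- a y) ^ n / fact n) \<le> norm (w y / \<rho> ^ n)"
    proof (intro AE_I2)
      fix y
      have "norm (g y * (- a y) ^ n / fact n) = g y * ((\<rho> * \<bar>a y\<bar>) ^ n / fact n) / \<rho> ^ n"
        using gnn[of y] \<rho> by (simp add: abs_mult power_abs power_mult_distrib)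
      also have "\<dots> \<le> g y * exp (\<rho> * \<bar>a y\<bar>) / \<rho> ^ n"
        using gnn[of y] \<rho> by (intro divide_right_mono mult_left_mono exp_term_le) auto
      also have "\<dots> \<le> w y / \<rho> ^ n"
        using gw[of \<rho> y] \<rho> by (intro divide_right_mono) auto
      also have "\<dots> \<le> norm (w y / \<rho> ^ n)" by (simp only: real_norm_def abs_ge_self)
      finally show "norm (g y * (- a y) ^ n / fact n) \<le> norm (w y / \<rho> ^ n)" .
    qed
  qed
  define F where "F z = (\<integral>y. complex_of_real (g y) * exp (complex_of_real (- a y) * (z - complex_of_real x)) \<partial>M)" for z
  have sums: "(\<lambda>n. complex_of_real (cn n) * (z - complex_of_real x) ^ n) sums F z"
    if z: "z \<in> ball (complex_of_real x) \<rho>" for z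
  proof -
    define q where "q = z - complex_of_real x"
    have nq: "norm q < \<rho>" using z by (simp add: q_def dist_norm norm_minus_commute)
    define s where "s K y = (\<Sum>n<K. complex_of_real (g y * (- a y) ^ n / fact n) * q ^ n)" for K y
    have ps: "(\<Sum>n<K. complex_of_real (cn n) * q ^ n) = (\<integral>y. s K y \<partial>M)" for K
    proof -
      have "(\<integral>y. s K y \<partial>M) = (\<Sum>n<K. \<integral>y. complex_of_real (g y * (- a y) ^ n / fact n) * q ^ n \<partial>M)"
        unfolding s_def
        by (rule Bochner_Integration.integral_sum[where f = "\<lambda>n y. complex_of_real (g y * (- a y) ^ n / fact n) * q ^ n"])
           (rule integrable_mult_left, rule integrable_of_real, rule tint)
      also have "\<dots> = (\<Sum>n<K. complex_of_real (cn n) * q ^ n)"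
        by (simp only: integral_mult_left_zero integral_complex_of_real cn_def)
      finally show ?thesis by simp
    qed
    have "(\<lambda>K. \<integral>y. s K y \<partial>M) \<longlonglongrightarrow> (\<integral>y. complex_of_real (g y) * exp (complex_of_real (- a y) * q) \<partial>M)"
    proof (rule integral_dominated_convergence[where w = w])
      show "(\<lambda>y. complex_of_real (g y) * exp (complex_of_real (- a y) * q)) \<in> borel_measurable M"
        by measurable
      show "s K \<in> borel_measurable M" for K unfolding s_def by measurable
      show "integrable M w" by (rule wint)
      show "AE y in M. (\<lambda>K. s K y) \<longlonglongrightarrow> complex_of_real (g y) * exp (complex_of_real (- a y) * q)"
      proof (intro AE_I2)
        fix y
        have "(\<lambda>n. (complex_of_real (- a y) * q) ^ n /\<^sub>R fact n) sums exp (complex_of_real (- a y) * q)"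
          by (rule exp_converges)
        from sums_mult[OF this, of "complex_of_real (g y)"]
        have "(\<lambda>n. complex_of_real (g y) * ((complex_of_real (- a y) * q) ^ n /\<^sub>R fact n)) sums
              (complex_of_real (g y) * exp (complex_of_real (- a y) * q))" .
        moreover have "complex_of_real (g y) * ((complex_of_real (- a y) * q) ^ n /\<^sub>R fact n)
              = complex_of_real (g y * (- a y) ^ n / fact n) * q ^ n" for n
          by (simp only: scaleR_conv_of_real power_mult_distrib of_real_mult of_real_divide of_real_power of_real_fact mult_ac divide_inverse)
        ultimately show "(\<lambda>K. s K y) \<longlonglongrightarrow> complex_of_real (g y) * exp (complex_of_real (- a y) * q)"
          by (simp add: sums_def s_def)
      qed
      show "AE y in M. norm (s K y) \<le> w y" for K
      proof (intro AE_I2)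
        fix y
        have "norm (s K y) \<le> (\<Sum>n<K. norm (complex_of_real (g y * (- a y) ^ n / fact n) * q ^ n))"
          unfolding s_def by (rule norm_sum)
        also have "\<dots> = g y * (\<Sum>n<K. (\<bar>a y\<bar> * norm q) ^ n / fact n)"
          unfolding sum_distrib_left
        proof (rule sum.cong[OF refl])
          fix n
          have "norm (complex_of_real (g y * (- a y) ^ n / fact n) * q ^ n) = \<bar>g y * (- a y) ^ n / fact n\<bar> * norm q ^ n"
            by (simp only: norm_mult norm_of_real norm_power)
          also have "\<dots> = g y * ((\<bar>a y\<bar> * norm q) ^ n / fact n)"
            using gnn[of y] by (simp add: abs_mult power_abs power_mult_distrib)
          finally show "norm (complex_of_real (g y * (- a y) ^ n / fact n) * q ^ n) = g y * ((\<bar>a y\<bar> * norm q) ^ n / fact n)" .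
        qed
        also have "\<dots> \<le> g y * exp (\<bar>a y\<bar> * norm q)"
          by (intro mult_left_mono exp_partial_le gnn) auto
        also have "\<dots> \<le> w y"
          using gw[of "norm q" y] nq by (simp add: mult.commute)
        finally show "norm (s K y) \<le> w y" .
      qed
    qed
    then show ?thesis
      unfolding sums_def F_def q_def[symmetric] ps .
  qed
  have hol: "F holomorphic_on ball (complex_of_real x) \<rho>"
    by (rule power_series_holomorphic[OF sums])
  have eq: "F (complex_of_real y) = complex_of_real (\<integral>v. h v * exp (- y * a v) \<partial>M)" for y
  proof -
    have "F (complex_of_real y) = (\<integral>v. complex_of_real (g v * exp (- a v * (y - x))) \<partial>M)"
      unfolding F_def by (simp add: exp_of_real flip: of_real_mult of_real_diff of_real_minus)
    also have "\<dots> = complex_of_real (\<integral>v. g v * exp (- a v * (y - x)) \<partial>M)"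
      by (rule integral_complex_of_real)
    also have "(\<lambda>v. g v * exp (- a v * (y - x))) = (\<lambda>v. h v * exp (- y * a v))"
      by (rule ext) (simp add: g_def algebra_simps flip: exp_add)
    finally show ?thesis .
  qed
  show ?thesis unfolding cra_def
    using \<rho>(1) hol eq by blast
qed

definition incr :: "(nat \<Rightarrow> real) \<Rightarrow> nat \<Rightarrow> real" where
  "incr L k = ext0 L k - ext0 L (k - 1)"

lemma sigma_finite_RN: "sigma_finite_measure (RN N)"
proof -
  interpret product_sigma_finite "\<lambda>_::nat. lborel :: real measure" by standard
  show ?thesis unfolding RN_def by (rule sigma_finite) simp
qed

lemma space_RN: "space (RN N) = PiE {1..N} (\<lambda>_. UNIV)"
  by (simp add: RN_def space_PiM)

lemma meas_ext0[measurable]: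
  assumes "j \<le> N"
  shows "(\<lambda>L. ext0 L j) \<in> borel_measurable (RN N)"
proof (cases "j = 0")
  case True then show ?thesis by (simp add: ext0_def)
next
  case False
  then have "j \<in> {1..N}" using assms by auto
  then have "(\<lambda>L. L j) \<in> measurable (RN N) lborel"
    unfolding RN_def by (rule measurable_component_singleton)
  then have "(\<lambda>L. L j) \<in> borel_measurable (RN N)" by simp
  then show ?thesis using False by (simp add: ext0_def)
qed

lemma meas_incr[measurable]:
  assumes "k \<le> N"
  shows "(\<lambda>L. incr L k) \<in> borel_measurable (RN N)"
  unfolding incr_def using assms by (intro borel_measurable_diff meas_ext0) auto

lemma test1: "(\<lambda>L. \<Prod>k=1..N. exp (c k * incr L k)) \<in> borel_measurable (RN N)"
  by measurable

lemma test2: "(\<lambda>L. lgrw_dens N \<beta> L) \<in> borel_measurable (RN N)"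
  unfolding lgrw_dens_def lg_incr_dens_def
  apply (rule borel_measurable_prod)
  apply (rule borel_measurable_divide)
  apply measurable
  apply (auto intro!: meas_ext0)
  done

lemma powr_exp_bound:
  fixes t \<alpha> :: real assumes "0 < \<alpha>" "0 < t"
  shows "t powr \<alpha> * exp (- t) \<le> \<alpha> powr \<alpha> * exp (- \<alpha>)"
proof -
  have "t / \<alpha> \<le> exp (t / \<alpha> - 1)" using exp_ge_add_one_self[of "t / \<alpha> - 1"] by simp
  then have "(t / \<alpha>) powr \<alpha> \<le> exp (t / \<alpha> - 1) powr \<alpha>"
    using assms by (intro powr_mono2) auto
  also have "\<dots> = exp (t - \<alpha>)"
    using assms by (simp add: powr_def field_simps)
  finally have "t powr \<alpha> / \<alpha> powr \<alpha> \<le> exp (t - \<alpha>)"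
    using assms by (simp add: powr_divide)
  then have "t powr \<alpha> \<le> \<alpha> powr \<alpha> * exp (t - \<alpha>)"
    using assms by (simp add: divide_le_eq mult.commute)
  then have "t powr \<alpha> * exp (- t) \<le> \<alpha> powr \<alpha> * exp (t - \<alpha>) * exp (- t)"
    by (intro mult_right_mono) auto
  also have "\<dots> = \<alpha> powr \<alpha> * exp (- \<alpha>)"
    by (simp add: mult.assoc flip: exp_add)
  finally show ?thesis .
qed

lemma nn_exp_half:
  fixes a :: real assumes "0 < a"
  shows "(\<integral>\<^sup>+y. ennreal (exp (- a * y)) * indicator {0..} y \<partial>lborel) < \<infinity>"
proof -
  have "(\<integral>\<^sup>+y. ennreal (exp (- a * y)) * indicator {0..} y \<partial>lborel) = ennreal (0 - (- exp (- a * 0) / a))"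
  proof (rule nn_integral_FTC_atLeast)
    show "(\<lambda>y. exp (- a * y)) \<in> borel_measurable borel" by measurable
    show "((\<lambda>y. - exp (- a * y) / a) has_real_derivative exp (- a * y)) (at y)" for y
      using assms by (auto intro!: derivative_eq_intros)
    show "0 \<le> exp (- a * y)" for y by simp
    show "((\<lambda>y. - exp (- a * y) / a) \<longlongrightarrow> 0) at_top"
      using assms by real_asymp
  qed
  then show ?thesis by simp
qed

lemma nn_reflect:
  fixes f :: "real \<Rightarrow> ennreal"
  assumes [measurable]: "f \<in> borel_measurable borel"
  shows "(\<integral>\<^sup>+y. f y \<partial>lborel) = (\<integral>\<^sup>+y. f (- y) \<partial>lborel)"
  using nn_integral_real_affine[OF assms, of "-1" 0] by simp

lemma lg_core_fin:
  fixes a :: real assumes "0 < a"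
  shows "(\<integral>\<^sup>+y. ennreal (exp (- a * y - exp (- y))) \<partial>lborel) < \<infinity>"
proof -
  define C where "C = (a + 1) powr (a + 1) * exp (- (a + 1))"
  have b1: "exp (- a * y - exp (- y)) \<le> exp (- a * y)" for y by simp
  have b2: "exp (- a * y - exp (- y)) \<le> C * exp (- (- y))" for y
  proof -
    define t where "t = exp (- y)"
    have t: "0 < t" by (simp add: t_def)
    have "exp (- a * y - exp (- y)) = t powr (a + 1) * exp (- t) / t"
      using t by (simp add: t_def powr_def field_simps flip: exp_add exp_diff)
    also have "\<dots> \<le> C / t"
      unfolding C_def using powr_exp_bound[of "a + 1" t] assms t by (intro divide_right_mono) auto
    also have "\<dots> = C * exp (- (- y))" by (simp add: t_def exp_minus field_simps)
    finally show ?thesis .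
  qed
  have "(\<integral>\<^sup>+y. ennreal (exp (- a * y - exp (- y))) \<partial>lborel)
      \<le> (\<integral>\<^sup>+y. ennreal (exp (- a * y)) * indicator {0..} y + ennreal C * (ennreal (exp (- (- y))) * indicator {0..} (- y)) \<partial>lborel)"
  proof (rule nn_integral_mono)
    fix y :: real
    show "ennreal (exp (- a * y - exp (- y))) \<le> ennreal (exp (- a * y)) * indicator {0..} y + ennreal C * (ennreal (exp (- (- y))) * indicator {0..} (- y))"
    proof (cases "0 \<le> y")
      case True
      then show ?thesis using b1[of y] by (simp add: indicator_def add_increasing2)
    next
      case False
      have "C \<ge> 0" by (simp add: C_def)
      with False show ?thesis using b2[of y]
        by (simp add: indicator_def add_increasing ennreal_mult[symmetric] del: ennreal_mult')
    qed
  qed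
  also have "\<dots> = (\<integral>\<^sup>+y. ennreal (exp (- a * y)) * indicator {0..} y \<partial>lborel)
      + ennreal C * (\<integral>\<^sup>+y. ennreal (exp (- (- y))) * indicator {0..} (- y) \<partial>lborel)"
    by (subst nn_integral_add) (auto intro!: nn_integral_cmult)
  also have "(\<integral>\<^sup>+y. ennreal (exp (- (- y))) * indicator {0..} (- y) \<partial>lborel)
      = (\<integral>\<^sup>+y. ennreal (exp (- y)) * indicator {0..} y \<partial>lborel)"
    by (rule nn_reflect[symmetric]) measurable
  also have "\<dots> = (\<integral>\<^sup>+y. ennreal (exp (- 1 * y)) * indicator {0..} y \<partial>lborel)" by simp
  finally show ?thesis
    using nn_exp_half[OF assms] nn_exp_half[of 1]
    by (simp add: ennreal_mult_less_top order_le_less_trans)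
qed

lemma lgint_fin:
  fixes b c :: real assumes "0 < b" "0 < b - c"
  shows "(\<integral>\<^sup>+y. ennreal (exp (c * y) * lg_incr_dens b y) \<partial>lborel) < \<infinity>"
proof -
  have G: "0 < Gamma b" using assms by (simp add: Gamma_real_pos)
  have "(\<integral>\<^sup>+y. ennreal (exp (c * y) * lg_incr_dens b y) \<partial>lborel)
      = (\<integral>\<^sup>+y. ennreal (exp (- (b - c) * y - exp (- y))) * ennreal (1 / Gamma b) \<partial>lborel)"
    using G by (intro nn_integral_cong)
      (simp add: lg_incr_dens_def ennreal_mult[symmetric] algebra_simps flip: exp_add del: ennreal_mult')
  also have "\<dots> = (\<integral>\<^sup>+y. ennreal (exp (- (b - c) * y - exp (- y))) \<partial>lborel) * ennreal (1 / Gamma b)"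
    by (rule nn_integral_multc) measurable
  also have "\<dots> < \<infinity>"
    using lg_core_fin[OF assms(2)] by (simp add: ennreal_mult_less_top)
  finally show ?thesis .
qed

lemma winv_fin:
  fixes \<theta> :: real assumes "0 < \<theta>"
  shows "(\<integral>\<^sup>+w. ennreal (if 0 < w then w powr (- \<theta> - 1) * exp (- 1 / w) else 0) \<partial>lborel) < \<infinity>"
proof -
  define C where "C = (\<theta> + 1) powr (\<theta> + 1) * exp (- (\<theta> + 1))"
  have C: "0 \<le> C" by (simp add: C_def)
  have b1: "w powr (- \<theta> - 1) * exp (- 1 / w) \<le> C" if "0 < w" for w
  proof -
    have "w powr (- \<theta> - 1) * exp (- 1 / w) = (1 / w) powr (\<theta> + 1) * exp (- (1 / w))"
    proof -
      have "(1 / w) powr (\<theta> + 1) = w powr (- \<theta> - 1)" using that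
      proof -
        have "(1 / w) powr (\<theta> + 1) = 1 / w powr (\<theta> + 1)" using that by (simp add: powr_divide)
        also have "\<dots> = inverse (w powr (\<theta> + 1))" by (simp add: divide_inverse)
        also have "\<dots> = w powr (- (\<theta> + 1))" by (rule powr_minus[symmetric])
        also have "- (\<theta> + 1) = - \<theta> - 1" by simp
        finally show ?thesis .
      qed
      then show ?thesis by simp
    qed
    also have "\<dots> \<le> C" unfolding C_def using that assms by (intro powr_exp_bound) auto
    finally show ?thesis .
  qed
  define f1 where "f1 w = ennreal C * indicator {0..1::real} w" for w
  define g1 where "g1 w = ennreal (w powr (- \<theta> - 1)) * indicator {1::real..} w" for w
  have f1m: "f1 \<in> borel_measurable borel" unfolding f1_def by measurable
  have g1m: "g1 \<in> borel_measurable borel" unfolding g1_def by measurable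
  have b2: "w powr (- \<theta> - 1) * exp (- 1 / w) \<le> w powr (- \<theta> - 1)" if "0 < w" for w
    using that by (simp add: mult_left_le)
  have "(\<integral>\<^sup>+w. ennreal (if 0 < w then w powr (- \<theta> - 1) * exp (- 1 / w) else 0) \<partial>lborel)
     \<le> (\<integral>\<^sup>+w. f1 w + g1 w \<partial>lborel)"
  proof (rule nn_integral_mono)
    fix w :: real
    consider "w \<le> 0" | "0 < w" "w \<le> 1" | "1 < w" by linarith
    then show "ennreal (if 0 < w then w powr (- \<theta> - 1) * exp (- 1 / w) else 0)
       \<le> f1 w + g1 w"
      unfolding f1_def g1_def
    proof cases
      case 1 then show "ennreal (if 0 < w then w powr (- \<theta> - 1) * exp (- 1 / w) else 0)
       \<le> ennreal C * indicator {0..1} w + ennreal (w powr (- \<theta> - 1)) * indicator {1..} w" by simp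
    next
      case 2
      have le: "ennreal (if 0 < w then w powr (- \<theta> - 1) * exp (- 1 / w) else 0) \<le> ennreal C"
        using b1[of w] 2 by (simp add: ennreal_leI)
      have "ennreal C = ennreal C * indicator {0..1} w" using 2 by simp
      then have "ennreal C \<le> ennreal C * indicator {0..1} w + ennreal (w powr (- \<theta> - 1)) * indicator {1..} w"
        by (intro add_increasing2 zero_le) simp
      then show "ennreal (if 0 < w then w powr (- \<theta> - 1) * exp (- 1 / w) else 0)
       \<le> ennreal C * indicator {0..1} w + ennreal (w powr (- \<theta> - 1)) * indicator {1..} w" using le by (rule order_trans[rotated])
    next
      case 3 then show "ennreal (if 0 < w then w powr (- \<theta> - 1) * exp (- 1 / w) else 0)
       \<le> ennreal C * indicator {0..1} w + ennreal (w powr (- \<theta> - 1)) * indicator {1..} w" using b2[of w]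
        by (simp add: indicator_def add_increasing)
    qed
  qed
  also have "\<dots> = (\<integral>\<^sup>+w. f1 w \<partial>lborel) + (\<integral>\<^sup>+w. g1 w \<partial>lborel)"
    by (rule nn_integral_add) (use f1m g1m in simp_all)
  also have "(\<integral>\<^sup>+w. f1 w \<partial>lborel) = ennreal C * (\<integral>\<^sup>+w. indicator {0..1::real} w \<partial>lborel)"
    unfolding f1_def by (rule nn_integral_cmult) measurable
  also have "(\<integral>\<^sup>+w. indicator {0..1::real} w \<partial>lborel) = (1::ennreal)"
    by (subst nn_integral_indicator) auto
  also have "(\<integral>\<^sup>+w. g1 w \<partial>lborel)
      = ennreal (0 - (- (1 powr (- \<theta>)) / \<theta>))"
    unfolding g1_def
  proof (rule nn_integral_FTC_atLeast)
    show "(\<lambda>w. w powr (- \<theta> - 1)) \<in> borel_measurable borel" by measurable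
    show "((\<lambda>w. - (w powr (- \<theta>)) / \<theta>) has_real_derivative w powr (- \<theta> - 1)) (at w)" if "1 \<le> w" for w
    proof -
      have w: "0 < w" using that by simp
      have "((\<lambda>w. - (w powr (- \<theta>)) / \<theta>) has_real_derivative - ((- \<theta>) * w powr (- \<theta> - 1)) / \<theta>) (at w)"
        by (intro DERIV_cdivide DERIV_minus has_real_derivative_powr w)
      then show ?thesis
        by (rule DERIV_cong) (use assms in simp)
    qed
    show "0 \<le> w powr (- \<theta> - 1)" for w by simp
    show "((\<lambda>w. - (w powr (- \<theta>)) / \<theta>) \<longlongrightarrow> 0) at_top"
      using assms by real_asymp
  qed
  finally show ?thesis
    by (simp add: ennreal_mult_less_top order_le_less_trans)
qed

lemma meas_prod_incr:
  fixes \<phi> :: "nat \<Rightarrow> real \<Rightarrow> real"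
  assumes [measurable]: "\<And>j. \<phi> j \<in> borel_measurable borel"
  shows "(\<lambda>L. \<Prod>j=1..N. ennreal (\<phi> j (incr L j))) \<in> borel_measurable (RN N)"
  by measurable

lemma RN_insert:
  assumes "f \<in> borel_measurable (RN (Suc N))"
  shows "integral\<^sup>N (RN (Suc N)) f = (\<integral>\<^sup>+x. (\<integral>\<^sup>+y. f (x(Suc N := y)) \<partial>lborel) \<partial>RN N)"
proof -
  interpret product_sigma_finite "\<lambda>_::nat. lborel :: real measure" by standard
  have ins: "{1..Suc N} = insert (Suc N) {1..N}" by auto
  show ?thesis
    unfolding RN_def ins
    using product_nn_integral_insert[of "{1..N}" "Suc N" f] assms[unfolded RN_def ins] by simp
qed

lemma prodincr:
  fixes \<phi> :: "nat \<Rightarrow> real \<Rightarrow> real"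
  assumes [measurable]: "\<And>j. \<phi> j \<in> borel_measurable borel"
  shows "(\<integral>\<^sup>+L. (\<Prod>j=1..N. ennreal (\<phi> j (incr L j))) \<partial>RN N) = (\<Prod>j=1..N. \<integral>\<^sup>+y. ennreal (\<phi> j y) \<partial>lborel)"
proof (induction N)
  case 0
  then show ?case by (simp add: RN_def PiM_empty)
next
  case (Suc N)
  interpret product_sigma_finite "\<lambda>_::nat. lborel :: real measure" by standard
  have ins: "{1..Suc N} = insert (Suc N) {1..N}" by auto
  have nin: "Suc N \<notin> {1..N}" by simp
  have meas: "(\<lambda>L. \<Prod>j=1..Suc N. ennreal (\<phi> j (incr L j))) \<in> borel_measurable (Pi\<^sub>M (insert (Suc N) {1..N}) (\<lambda>_. lborel))"
    using meas_prod_incr[of \<phi> "Suc N", OF assms] unfolding RN_def ins .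
  have upd: "(\<Prod>j=1..Suc N. ennreal (\<phi> j (incr (x(Suc N := y)) j)))
      = (\<Prod>j=1..N. ennreal (\<phi> j (incr x j))) * ennreal (\<phi> (Suc N) (y - ext0 x N))" for x :: "nat \<Rightarrow> real" and y
  proof -
    have "(\<Prod>j=1..N. ennreal (\<phi> j (incr (x(Suc N := y)) j))) = (\<Prod>j=1..N. ennreal (\<phi> j (incr x j)))"
      by (rule prod.cong) (auto simp: incr_def ext0_def)
    moreover have "incr (x(Suc N := y)) (Suc N) = y - ext0 x N"
      by (simp add: incr_def ext0_def)
    ultimately show ?thesis
      by (simp add: ins prod.insert[OF _ nin] mult.commute)
  qed
  have shift: "(\<integral>\<^sup>+y. ennreal (\<phi> (Suc N) (y - e)) \<partial>lborel) = (\<integral>\<^sup>+y. ennreal (\<phi> (Suc N) y) \<partial>lborel)" for e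
    using nn_integral_real_affine[of "\<lambda>y. ennreal (\<phi> (Suc N) (y - e))" 1 e] by simp
  have "(\<integral>\<^sup>+L. (\<Prod>j=1..Suc N. ennreal (\<phi> j (incr L j))) \<partial>RN (Suc N))
     = (\<integral>\<^sup>+x. (\<integral>\<^sup>+y. (\<Prod>j=1..Suc N. ennreal (\<phi> j (incr (x(Suc N := y)) j))) \<partial>lborel) \<partial>RN N)"
    by (rule RN_insert) (rule meas_prod_incr, rule assms)
  also have "\<dots> = (\<integral>\<^sup>+x. (\<Prod>j=1..N. ennreal (\<phi> j (incr x j))) * (\<integral>\<^sup>+y. ennreal (\<phi> (Suc N) y) \<partial>lborel) \<partial>RN N)"
  proof (rule nn_integral_cong)
    fix x :: "nat \<Rightarrow> real"
    have "(\<integral>\<^sup>+y. (\<Prod>j=1..Suc N. ennreal (\<phi> j (incr (x(Suc N := y)) j))) \<partial>lborel)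
        = (\<integral>\<^sup>+y. (\<Prod>j=1..N. ennreal (\<phi> j (incr x j))) * ennreal (\<phi> (Suc N) (y - ext0 x N)) \<partial>lborel)"
      by (simp only: upd)
    also have "\<dots> = (\<Prod>j=1..N. ennreal (\<phi> j (incr x j))) * (\<integral>\<^sup>+y. ennreal (\<phi> (Suc N) (y - ext0 x N)) \<partial>lborel)"
      by (rule nn_integral_cmult) measurable
    also have "\<dots> = (\<Prod>j=1..N. ennreal (\<phi> j (incr x j))) * (\<integral>\<^sup>+y. ennreal (\<phi> (Suc N) y) \<partial>lborel)"
      by (simp only: shift)
    finally show "(\<integral>\<^sup>+y. (\<Prod>j=1..Suc N. ennreal (\<phi> j (incr (x(Suc N := y)) j))) \<partial>lborel)
        = (\<Prod>j=1..N. ennreal (\<phi> j (incr x j))) * (\<integral>\<^sup>+y. ennreal (\<phi> (Suc N) y) \<partial>lborel)" .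
  qed
  also have "\<dots> = (\<integral>\<^sup>+x. (\<Prod>j=1..N. ennreal (\<phi> j (incr x j))) \<partial>RN N) * (\<integral>\<^sup>+y. ennreal (\<phi> (Suc N) y) \<partial>lborel)"
    by (rule nn_integral_multc) (rule meas_prod_incr, rule assms)
  also have "\<dots> = (\<Prod>j=1..Suc N. \<integral>\<^sup>+y. ennreal (\<phi> j y) \<partial>lborel)"
    by (subst Suc.IH) (simp add: ins prod.insert[OF _ nin] mult.commute)
  finally show ?case .
qed

lemma lgrw_incr: "lgrw_dens N \<beta> L = (\<Prod>j=1..N. lg_incr_dens (\<beta> j) (incr L j))"
  by (simp add: lgrw_dens_def incr_def)

lemma lg_nonneg: "0 < b \<Longrightarrow> 0 \<le> lg_incr_dens b y"
  by (simp add: lg_incr_dens_def Gamma_real_pos less_imp_le)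

lemma lgrw_nonneg: "\<forall>k\<in>{1..N}. 0 < \<beta> k \<Longrightarrow> 0 \<le> lgrw_dens N \<beta> L"
  unfolding lgrw_incr by (intro prod_nonneg) (auto intro!: lg_nonneg)

lemma walk_fin:
  assumes pos: "\<forall>k\<in>{1..N}. 0 < \<beta> k" and cpos: "\<forall>k\<in>{1..N}. 0 < \<beta> k - c k"
  shows "(\<integral>\<^sup>+L. ennreal (exp (\<Sum>k=1..N. c k * incr L k) * lgrw_dens N \<beta> L) \<partial>RN N) < \<infinity>"
proof -
  define \<phi> where "\<phi> k y = exp (c k * y) * lg_incr_dens (\<beta> k) y" for k y
  have \<phi>m: "\<phi> k \<in> borel_measurable borel" for k unfolding \<phi>_def lg_incr_dens_def by measurable
  have "(\<integral>\<^sup>+L. ennreal (exp (\<Sum>k=1..N. c k * incr L k) * lgrw_dens N \<beta> L) \<partial>RN N)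
      = (\<integral>\<^sup>+L. (\<Prod>j=1..N. ennreal (\<phi> j (incr L j))) \<partial>RN N)"
  proof (rule nn_integral_cong)
    fix L :: "nat \<Rightarrow> real"
    have "exp (\<Sum>k=1..N. c k * incr L k) * lgrw_dens N \<beta> L = (\<Prod>j=1..N. \<phi> j (incr L j))"
      by (simp add: exp_sum lgrw_incr \<phi>_def prod.distrib)
    moreover have "(\<Prod>j=1..N. ennreal (\<phi> j (incr L j))) = ennreal (\<Prod>j=1..N. \<phi> j (incr L j))"
      by (rule prod_ennreal) (use pos in \<open>auto simp: \<phi>_def intro!: lg_nonneg mult_nonneg_nonneg\<close>)
    ultimately show "ennreal (exp (\<Sum>k=1..N. c k * incr L k) * lgrw_dens N \<beta> L) = (\<Prod>j=1..N. ennreal (\<phi> j (incr L j)))"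
      by simp
  qed
  also have "\<dots> = (\<Prod>j=1..N. \<integral>\<^sup>+y. ennreal (\<phi> j y) \<partial>lborel)"
    by (rule prodincr[OF \<phi>m])
  also have "\<dots> < \<infinity>"
  proof -
    have "(\<integral>\<^sup>+y. ennreal (\<phi> j y) \<partial>lborel) < \<infinity>" if "j \<in> {1..N}" for j
      unfolding \<phi>_def using pos cpos that by (intro lgint_fin) auto
    then have ne: "(\<integral>\<^sup>+y. ennreal (\<phi> j y) \<partial>lborel) \<noteq> top" if "j \<in> {1..N}" for j
      using that by (simp add: less_top)
    have "(\<Prod>j=1..N. \<integral>\<^sup>+y. ennreal (\<phi> j y) \<partial>lborel) \<noteq> top"
      unfolding ennreal_prod_eq_top using ne by blast
    then show ?thesis by (simp add: less_top)
  qed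
  finally show ?thesis .
qed

lemma ext0_telescope: "ext0 L m = (\<Sum>k=1..m. incr L k)"
proof (induction m)
  case 0 then show ?case by (simp add: ext0_def)
next
  case (Suc m) then show ?case by (simp add: incr_def)
qed

lemma sum_if_le:
  assumes "j \<le> N"
  shows "(\<Sum>k=1..N. (if k \<le> j then a else b) * incr L k) = a * ext0 L j + b * (ext0 L N - ext0 L j)"
proof -
  have "(\<Sum>k=1..N. (if k \<le> j then a else b) * incr L k)
      = (\<Sum>k=1..N. b * incr L k) + (\<Sum>k=1..N. (if k \<in> {..j} then (a - b) * incr L k else 0))"
    unfolding sum.distrib[symmetric] by (rule sum.cong) (auto simp: algebra_simps)
  also have "(\<Sum>k=1..N. (if k \<in> {..j} then (a - b) * incr L k else 0)) = (\<Sum>k\<in>{1..N} \<inter> {..j}. (a - b) * incr L k)"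
    by (rule sum.inter_restrict[symmetric]) simp
  also have "{1..N} \<inter> {..j} = {1..j}" using assms by auto
  also have "(\<Sum>k\<in>{1..j}. (a - b) * incr L k) = (a - b) * ext0 L j"
    by (simp only: ext0_telescope[of L j] sum_distrib_left)
  also have "(\<Sum>k=1..N. b * incr L k) = b * ext0 L N"
    by (simp only: ext0_telescope[of L N] sum_distrib_left)
  finally show ?thesis by (simp add: algebra_simps)
qed

definition Ssum :: "nat \<Rightarrow> (nat \<Rightarrow> real) \<Rightarrow> (nat \<Rightarrow> real) \<Rightarrow> real" where
  "Ssum N L1 L2 = (\<Sum>j=1..N. exp (ext0 L2 j - ext0 L1 (j - 1)))"

lemma Ssum_pos: "1 \<le> N \<Longrightarrow> 0 < Ssum N L1 L2"
  unfolding Ssum_def by (intro sum_pos) auto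

lemma Ssum_ge: "j \<in> {1..N} \<Longrightarrow> exp (ext0 L2 j - ext0 L1 (j - 1)) \<le> Ssum N L1 L2"
  unfolding Ssum_def by (rule member_le_sum) auto

lemma Vfun_Ssum: "Vfun N u v L1 L2 = Ssum N L1 L2 powr (- (u + v)) * exp (- v * (ext0 L1 N - ext0 L2 N))"
  by (simp add: Vfun_def Ssum_def)

lemma exp_powr_real: "exp (z::real) powr a = exp (a * z)"
  by (simp add: powr_def)

definition VB :: "nat \<Rightarrow> (nat \<Rightarrow> real) \<Rightarrow> real \<Rightarrow> real \<Rightarrow> nat set \<Rightarrow> (nat \<Rightarrow> real) \<Rightarrow> (nat \<Rightarrow> nat \<Rightarrow> real) \<Rightarrow> (nat \<Rightarrow> nat \<Rightarrow> real) \<Rightarrow> bool" where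
  "VB N \<beta> u v I K cx cy \<longleftrightarrow> finite I \<and> (\<forall>i\<in>I. 0 \<le> K i) \<and>
     (\<forall>i\<in>I. \<forall>k\<in>{1..N}. 0 < \<beta> k - cx i k \<and> 0 < \<beta> k - cy i k) \<and>
     (\<forall>L1 L2. Vfun N u v L1 L2 \<le> (\<Sum>i\<in>I. K i * exp (\<Sum>k=1..N. cx i k * incr L1 k) * exp (\<Sum>k=1..N. cy i k * incr L2 k)))"

lemma Vbound:
  assumes N: "1 \<le> N"
    and pos: "\<forall>k\<in>{1..N}. 0 < \<beta> k" and uu: "\<forall>k\<in>{1..N}. 0 < \<beta> k + u" and vv: "\<forall>k\<in>{1..N}. 0 < \<beta> k + v"
  shows "\<exists>I K cx cy. VB N \<beta> u v I K cx cy"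
proof (cases "0 \<le> u + v")
  case True
  define p where "p = u + v"
  define q where "q = max 0 (min p v)"
  have q: "0 \<le> q" "q \<le> p" using True by (auto simp: q_def p_def)
  define cx where "cx (i::nat) (k::nat) = (if k \<le> N - 1 then q - v else - v)" for i k
  define cy where "cy (i::nat) (k::nat) = (if k \<le> 1 then - u else v - q)" for i k
  have conds: "\<forall>i\<in>{0::nat}. \<forall>k\<in>{1..N}. 0 < \<beta> k - cx i k \<and> 0 < \<beta> k - cy i k"
  proof (intro ballI conjI)
    fix i k assume k: "k \<in> {1..N}"
    have b: "0 < \<beta> k" "0 < \<beta> k + u" "0 < \<beta> k + v" using pos uu vv k by auto
    show "0 < \<beta> k - cx i k"
      using b unfolding cx_def q_def p_def by (auto simp: max_def min_def)
    show "0 < \<beta> k - cy i k"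
      using b unfolding cy_def q_def p_def by (auto simp: max_def min_def)
  qed
  have bound: "Vfun N u v L1 L2 \<le> (\<Sum>i\<in>{0::nat}. 1 * exp (\<Sum>k=1..N. cx i k * incr L1 k) * exp (\<Sum>k=1..N. cy i k * incr L2 k))" for L1 L2
  proof -
    define S where "S = Ssum N L1 L2"
    have S: "0 < S" using Ssum_pos[OF N] by (simp add: S_def)
    have T1: "exp (ext0 L2 1) \<le> S"
      using Ssum_ge[of 1 N L2 L1] N by (simp add: S_def ext0_def)
    have TN: "exp (ext0 L2 N - ext0 L1 (N - 1)) \<le> S"
      using Ssum_ge[of N N L2 L1] N by (simp add: S_def)
    have "S powr (- p) = S powr (- (p - q)) * S powr (- q)"
      by (simp add: powr_add[symmetric])
    also have "\<dots> \<le> exp (ext0 L2 1) powr (- (p - q)) * exp (ext0 L2 N - ext0 L1 (N - 1)) powr (- q)"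
      using q by (intro mult_mono powr_mono2' T1 TN) auto
    also have "\<dots> = exp (- (p - q) * ext0 L2 1) * exp (- q * (ext0 L2 N - ext0 L1 (N - 1)))"
      by (simp only: exp_powr_real)
    also have "\<dots> = exp (- (p - q) * ext0 L2 1 - q * (ext0 L2 N - ext0 L1 (N - 1)))"
      by (subst exp_add[symmetric]) (simp add: algebra_simps)
    finally have Sb: "S powr (- p) \<le> exp (- (p - q) * ext0 L2 1 - q * (ext0 L2 N - ext0 L1 (N - 1)))" .
    have E: "(- (p - q) * ext0 L2 1 - q * (ext0 L2 N - ext0 L1 (N - 1))) + (- v * (ext0 L1 N - ext0 L2 N))
        = (\<Sum>k=1..N. cx 0 k * incr L1 k) + (\<Sum>k=1..N. cy 0 k * incr L2 k)"
    proof -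
      have s1: "(\<Sum>k=1..N. cx 0 k * incr L1 k) = (q - v) * ext0 L1 (N - 1) + (- v) * (ext0 L1 N - ext0 L1 (N - 1))"
        unfolding cx_def by (rule sum_if_le) simp
      have s2: "(\<Sum>k=1..N. cy 0 k * incr L2 k) = (- u) * ext0 L2 1 + (v - q) * (ext0 L2 N - ext0 L2 1)"
        unfolding cy_def by (rule sum_if_le) (use N in simp)
      show ?thesis by (simp only: s1 s2) (simp add: p_def algebra_simps)
    qed
    have "Vfun N u v L1 L2 = S powr (- p) * exp (- v * (ext0 L1 N - ext0 L2 N))"
      by (simp add: Vfun_Ssum S_def p_def)
    also have "\<dots> \<le> exp (- (p - q) * ext0 L2 1 - q * (ext0 L2 N - ext0 L1 (N - 1))) * exp (- v * (ext0 L1 N - ext0 L2 N))"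
      by (intro mult_right_mono Sb) simp
    also have "\<dots> = exp ((\<Sum>k=1..N. cx 0 k * incr L1 k) + (\<Sum>k=1..N. cy 0 k * incr L2 k))"
      by (simp only: E[symmetric] exp_add)
    finally show ?thesis by (simp add: exp_add)
  qed
  show ?thesis
    by (rule exI[of _ "{0}"], rule exI[of _ "\<lambda>_. 1"], rule exI[of _ cx], rule exI[of _ cy])
       (use conds bound in \<open>auto simp: VB_def\<close>)
next
  case False
  define p where "p = u + v"
  define r where "r = - p"
  have r: "0 < r" using False by (simp add: r_def p_def)
  define cx where "cx (j::nat) (k::nat) = (if k \<le> j - 1 then u else - v)" for j k
  define cy where "cy (j::nat) (k::nat) = (if k \<le> j then - u else v)" for j k
  have conds: "\<forall>i\<in>{1..N}. \<forall>k\<in>{1..N}. 0 < \<beta> k - cx i k \<and> 0 < \<beta> k - cy i k"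
  proof (intro ballI conjI)
    fix i k assume k: "k \<in> {1..N}"
    have b: "0 < \<beta> k" "0 < \<beta> k + u" "0 < \<beta> k + v" using pos uu vv k by auto
    show "0 < \<beta> k - cx i k"
      using b False unfolding cx_def by auto
    show "0 < \<beta> k - cy i k"
      using b False unfolding cy_def by auto
  qed
  have bound: "Vfun N u v L1 L2 \<le> (\<Sum>j\<in>{1..N}. real N powr r * exp (\<Sum>k=1..N. cx j k * incr L1 k) * exp (\<Sum>k=1..N. cy j k * incr L2 k))" for L1 L2
  proof -
    define S where "S = Ssum N L1 L2"
    define T where "T j = exp (ext0 L2 j - ext0 L1 (j - 1))" for j
    have S: "0 < S" using Ssum_pos[OF N] by (simp add: S_def)
    define m where "m = Max (T ` {1..N})"
    have "m \<in> T ` {1..N}" unfolding m_def using N by (intro Max_in) auto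
    then obtain j0 where j0: "j0 \<in> {1..N}" "m = T j0" by auto
    have Tle: "T j \<le> T j0" if "j \<in> {1..N}" for j
      using that j0 unfolding m_def by (metis Max_ge finite_atLeastAtMost finite_imageI image_eqI)
    have "S \<le> (\<Sum>j=1..N. T j0)" unfolding S_def Ssum_def T_def[symmetric]
      by (rule sum_mono) (rule Tle)
    also have "\<dots> = real N * T j0" by simp
    finally have SN: "S \<le> real N * T j0" .
    have "S powr r \<le> (real N * T j0) powr r"
      using S SN r by (intro powr_mono2) auto
    also have "\<dots> = real N powr r * T j0 powr r"
      using powr_mult[of "real N" "T j0" r] by (simp add: T_def)
    also have "\<dots> \<le> real N powr r * (\<Sum>j=1..N. T j powr r)"
      using j0 by (intro mult_left_mono member_le_sum) auto
    finally have Sb: "S powr r \<le> real N powr r * (\<Sum>j=1..N. T j powr r)" .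
    have E: "exp (- p * (ext0 L2 j - ext0 L1 (j - 1))) * exp (- v * (ext0 L1 N - ext0 L2 N))
        = exp (\<Sum>k=1..N. cx j k * incr L1 k) * exp (\<Sum>k=1..N. cy j k * incr L2 k)" if "j \<in> {1..N}" for j
    proof -
      have "- p * (ext0 L2 j - ext0 L1 (j - 1)) + - v * (ext0 L1 N - ext0 L2 N)
          = (\<Sum>k=1..N. cx j k * incr L1 k) + (\<Sum>k=1..N. cy j k * incr L2 k)"
      proof -
        have s1: "(\<Sum>k=1..N. cx j k * incr L1 k) = u * ext0 L1 (j - 1) + (- v) * (ext0 L1 N - ext0 L1 (j - 1))"
          unfolding cx_def by (rule sum_if_le) (use that in auto)
        have s2: "(\<Sum>k=1..N. cy j k * incr L2 k) = (- u) * ext0 L2 j + v * (ext0 L2 N - ext0 L2 j)"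
          unfolding cy_def by (rule sum_if_le) (use that in simp)
        show ?thesis by (simp only: s1 s2) (simp add: p_def algebra_simps)
      qed
      then show ?thesis by (simp flip: exp_add)
    qed
    have "Vfun N u v L1 L2 = S powr r * exp (- v * (ext0 L1 N - ext0 L2 N))"
      by (simp add: Vfun_Ssum S_def r_def p_def)
    also have "\<dots> \<le> real N powr r * (\<Sum>j=1..N. T j powr r) * exp (- v * (ext0 L1 N - ext0 L2 N))"
      by (intro mult_right_mono Sb) simp
    also have "\<dots> = (\<Sum>j=1..N. real N powr r * (exp (- p * (ext0 L2 j - ext0 L1 (j - 1))) * exp (- v * (ext0 L1 N - ext0 L2 N))))"
      by (simp add: sum_distrib_left sum_distrib_right T_def exp_powr_real r_def mult_ac)
    also have "\<dots> = (\<Sum>j=1..N. real N powr r * exp (\<Sum>k=1..N. cx j k * incr L1 k) * exp (\<Sum>k=1..N. cy j k * incr L2 k))"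
    proof (rule sum.cong[OF refl])
      fix j assume j: "j \<in> {1..N}"
      show "real N powr r * (exp (- p * (ext0 L2 j - ext0 L1 (j - 1))) * exp (- v * (ext0 L1 N - ext0 L2 N)))
          = real N powr r * exp (\<Sum>k=1..N. cx j k * incr L1 k) * exp (\<Sum>k=1..N. cy j k * incr L2 k)"
        by (subst E[OF j]) (simp only: mult.assoc)
    qed
    finally show ?thesis .
  qed
  show ?thesis
    by (rule exI[of _ "{1..N}"], rule exI[of _ "\<lambda>_. real N powr r"], rule exI[of _ cx], rule exI[of _ cy])
       (use conds bound in \<open>auto simp: VB_def\<close>)
qed

lemma meas_walk:
  "(\<lambda>L. exp (\<Sum>k=1..N. c k * incr L k) * lgrw_dens N \<beta> L) \<in> borel_measurable (RN N)"
  by (rule borel_measurable_times[OF _ test2]) measurable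

lemma Bfin:
  assumes N: "1 \<le> N"
    and pos: "\<forall>k\<in>{1..N}. 0 < \<beta> k" and uu: "\<forall>k\<in>{1..N}. 0 < \<beta> k + u" and vv: "\<forall>k\<in>{1..N}. 0 < \<beta> k + v"
  shows "(\<integral>\<^sup>+L1. (\<integral>\<^sup>+L2. ennreal (Vfun N u v L1 L2 * lgrw_dens N \<beta> L1 * lgrw_dens N \<beta> L2) \<partial>RN N) \<partial>RN N) < \<infinity>"
    and "(\<integral>\<^sup>+L2. ennreal (Vfun N u v L1 L2 * lgrw_dens N \<beta> L1 * lgrw_dens N \<beta> L2) \<partial>RN N) < \<infinity>"
proof -
  obtain I K cx cy where H0: "VB N \<beta> u v I K cx cy"
    using Vbound[OF N pos uu vv] by blast
  note H = H0[unfolded VB_def]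
  note I = H[THEN conjunct1]
  note K = H[THEN conjunct2, THEN conjunct1]
  note c = H[THEN conjunct2, THEN conjunct2, THEN conjunct1]
  note V = H[THEN conjunct2, THEN conjunct2, THEN conjunct2]
  define F where "F i L = exp (\<Sum>k=1..N. cx i k * incr L k) * lgrw_dens N \<beta> L" for i L
  define G where "G i L = exp (\<Sum>k=1..N. cy i k * incr L k) * lgrw_dens N \<beta> L" for i L
  have Fm: "(\<lambda>L. ennreal (F i L)) \<in> borel_measurable (RN N)" for i
    unfolding F_def using meas_walk by measurable
  have Gm: "(\<lambda>L. ennreal (G i L)) \<in> borel_measurable (RN N)" for i
    unfolding G_def using meas_walk by measurable
  have F0: "0 \<le> F i L" for i L unfolding F_def using lgrw_nonneg[OF pos] by simp
  have G0: "0 \<le> G i L" for i L unfolding G_def using lgrw_nonneg[OF pos] by simp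
  have Ffin: "(\<integral>\<^sup>+L. ennreal (F i L) \<partial>RN N) < \<infinity>" if "i \<in> I" for i
    unfolding F_def using c that by (intro walk_fin pos) auto
  have Gfin: "(\<integral>\<^sup>+L. ennreal (G i L) \<partial>RN N) < \<infinity>" if "i \<in> I" for i
    unfolding G_def using c that by (intro walk_fin pos) auto
  have pw: "ennreal (Vfun N u v L1 L2 * lgrw_dens N \<beta> L1 * lgrw_dens N \<beta> L2)
      \<le> (\<Sum>i\<in>I. ennreal (K i * F i L1) * ennreal (G i L2))" for L1 L2
  proof -
    have l1: "0 \<le> lgrw_dens N \<beta> L1" and l2: "0 \<le> lgrw_dens N \<beta> L2" using lgrw_nonneg[OF pos] by auto
    have "Vfun N u v L1 L2 * lgrw_dens N \<beta> L1 * lgrw_dens N \<beta> L2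
        \<le> (\<Sum>i\<in>I. K i * exp (\<Sum>k=1..N. cx i k * incr L1 k) * exp (\<Sum>k=1..N. cy i k * incr L2 k)) * lgrw_dens N \<beta> L1 * lgrw_dens N \<beta> L2"
      using V l1 l2 by (intro mult_right_mono) auto
    also have "\<dots> = (\<Sum>i\<in>I. K i * F i L1 * G i L2)"
      unfolding sum_distrib_right by (rule sum.cong[OF refl]) (simp add: F_def G_def mult_ac)
    finally have "ennreal (Vfun N u v L1 L2 * lgrw_dens N \<beta> L1 * lgrw_dens N \<beta> L2) \<le> ennreal (\<Sum>i\<in>I. K i * F i L1 * G i L2)"
      by (rule ennreal_leI)
    also have "\<dots> = (\<Sum>i\<in>I. ennreal (K i * F i L1 * G i L2))"
      by (rule sum_ennreal[symmetric]) (use K F0 G0 in auto)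
    also have "\<dots> = (\<Sum>i\<in>I. ennreal (K i * F i L1) * ennreal (G i L2))"
    proof (rule sum.cong[OF refl])
      fix i assume i: "i \<in> I"
      have "0 \<le> K i * F i L1" using K F0 i by simp
      then show "ennreal (K i * F i L1 * G i L2) = ennreal (K i * F i L1) * ennreal (G i L2)"
        by (rule ennreal_mult[OF _ G0])
    qed
    finally show ?thesis .
  qed
  have inner: "(\<integral>\<^sup>+L2. ennreal (Vfun N u v L1 L2 * lgrw_dens N \<beta> L1 * lgrw_dens N \<beta> L2) \<partial>RN N)
      \<le> (\<Sum>i\<in>I. ennreal (K i * F i L1) * (\<integral>\<^sup>+L. ennreal (G i L) \<partial>RN N))" for L1
  proof -
    have "(\<integral>\<^sup>+L2. ennreal (Vfun N u v L1 L2 * lgrw_dens N \<beta> L1 * lgrw_dens N \<beta> L2) \<partial>RN N)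
        \<le> (\<integral>\<^sup>+L2. (\<Sum>i\<in>I. ennreal (K i * F i L1) * ennreal (G i L2)) \<partial>RN N)"
      by (rule nn_integral_mono) (rule pw)
    also have "\<dots> = (\<Sum>i\<in>I. \<integral>\<^sup>+L2. ennreal (K i * F i L1) * ennreal (G i L2) \<partial>RN N)"
      by (rule nn_integral_sum) (use Gm in measurable)
    also have "\<dots> = (\<Sum>i\<in>I. ennreal (K i * F i L1) * (\<integral>\<^sup>+L. ennreal (G i L) \<partial>RN N))"
      by (rule sum.cong[OF refl]) (rule nn_integral_cmult[OF Gm])
    finally show ?thesis .
  qed
  show "(\<integral>\<^sup>+L2. ennreal (Vfun N u v L1 L2 * lgrw_dens N \<beta> L1 * lgrw_dens N \<beta> L2) \<partial>RN N) < \<infinity>"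
  proof (rule order_le_less_trans[OF inner])
    show "(\<Sum>i\<in>I. ennreal (K i * F i L1) * (\<integral>\<^sup>+L. ennreal (G i L) \<partial>RN N)) < \<infinity>"
      using Gfin I by (simp add: ennreal_mult_less_top)
  qed
  have "(\<integral>\<^sup>+L1. (\<integral>\<^sup>+L2. ennreal (Vfun N u v L1 L2 * lgrw_dens N \<beta> L1 * lgrw_dens N \<beta> L2) \<partial>RN N) \<partial>RN N)
      \<le> (\<integral>\<^sup>+L1. (\<Sum>i\<in>I. ennreal (K i) * ennreal (F i L1) * (\<integral>\<^sup>+L. ennreal (G i L) \<partial>RN N)) \<partial>RN N)"
  proof (rule nn_integral_mono)
    fix L1
    have "(\<Sum>i\<in>I. ennreal (K i * F i L1) * (\<integral>\<^sup>+L. ennreal (G i L) \<partial>RN N))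
        = (\<Sum>i\<in>I. ennreal (K i) * ennreal (F i L1) * (\<integral>\<^sup>+L. ennreal (G i L) \<partial>RN N))"
    proof (rule sum.cong[OF refl])
      fix i assume i: "i \<in> I"
      have "ennreal (K i * F i L1) = ennreal (K i) * ennreal (F i L1)"
        using K i by (intro ennreal_mult F0) auto
      then show "ennreal (K i * F i L1) * (\<integral>\<^sup>+L. ennreal (G i L) \<partial>RN N) = ennreal (K i) * ennreal (F i L1) * (\<integral>\<^sup>+L. ennreal (G i L) \<partial>RN N)"
        by (simp only:)
    qed
    then show "(\<integral>\<^sup>+L2. ennreal (Vfun N u v L1 L2 * lgrw_dens N \<beta> L1 * lgrw_dens N \<beta> L2) \<partial>RN N)
        \<le> (\<Sum>i\<in>I. ennreal (K i) * ennreal (F i L1) * (\<integral>\<^sup>+L. ennreal (G i L) \<partial>RN N))"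
      using inner[of L1] by simp
  qed
  also have "\<dots> = (\<Sum>i\<in>I. \<integral>\<^sup>+L1. ennreal (K i) * ennreal (F i L1) * (\<integral>\<^sup>+L. ennreal (G i L) \<partial>RN N) \<partial>RN N)"
    by (rule nn_integral_sum) (use Fm in measurable)
  also have "\<dots> = (\<Sum>i\<in>I. ennreal (K i) * (\<integral>\<^sup>+L1. ennreal (F i L1) \<partial>RN N) * (\<integral>\<^sup>+L. ennreal (G i L) \<partial>RN N))"
  proof (rule sum.cong[OF refl])
    fix i assume "i \<in> I"
    have "(\<integral>\<^sup>+L1. ennreal (K i) * ennreal (F i L1) * (\<integral>\<^sup>+L. ennreal (G i L) \<partial>RN N) \<partial>RN N)
       = (\<integral>\<^sup>+L1. ennreal (K i) * ennreal (F i L1) \<partial>RN N) * (\<integral>\<^sup>+L. ennreal (G i L) \<partial>RN N)"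
      by (rule nn_integral_multc) (use Fm in measurable)
    also have "(\<integral>\<^sup>+L1. ennreal (K i) * ennreal (F i L1) \<partial>RN N) = ennreal (K i) * (\<integral>\<^sup>+L1. ennreal (F i L1) \<partial>RN N)"
      by (rule nn_integral_cmult[OF Fm])
    finally show "(\<integral>\<^sup>+L1. ennreal (K i) * ennreal (F i L1) * (\<integral>\<^sup>+L. ennreal (G i L) \<partial>RN N) \<partial>RN N)
       = ennreal (K i) * (\<integral>\<^sup>+L1. ennreal (F i L1) \<partial>RN N) * (\<integral>\<^sup>+L. ennreal (G i L) \<partial>RN N)" .
  qed
  also have "\<dots> < \<infinity>"
    using Ffin Gfin I by (simp add: ennreal_mult_less_top)
  finally show "(\<integral>\<^sup>+L1. (\<integral>\<^sup>+L2. ennreal (Vfun N u v L1 L2 * lgrw_dens N \<beta> L1 * lgrw_dens N \<beta> L2) \<partial>RN N) \<partial>RN N) < \<infinity>" .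
qed

lemma meas_comp_any[measurable]: "(\<lambda>L. L j) \<in> borel_measurable (RN N)"
proof (cases "j \<in> {1..N}")
  case True
  then have "(\<lambda>L. L j) \<in> measurable (RN N) lborel"
    unfolding RN_def by (rule measurable_component_singleton)
  then show ?thesis by simp
next
  case False
  have "(\<lambda>L. undefined :: real) \<in> borel_measurable (RN N)" by simp
  moreover have "\<And>L. L \<in> space (RN N) \<Longrightarrow> undefined = L j"
    using False by (auto simp: space_RN PiE_def extensional_def)
  ultimately show ?thesis by (rule measurable_cong[THEN iffD1, rotated])
qed

lemma meas_ext0_any[measurable]: "(\<lambda>L. ext0 L j) \<in> borel_measurable (RN N)"
  unfolding ext0_def by measurable

lemma meas_lgrw[measurable]: "(\<lambda>L. lgrw_dens N \<beta> L) \<in> borel_measurable (RN N)"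
  by (rule test2)

lemma meas_Ssum: "(\<lambda>z. Ssum N (fst z) (snd z)) \<in> borel_measurable (RN N \<Otimes>\<^sub>M RN N)"
  unfolding Ssum_def by measurable

lemma meas_Vfun: "(\<lambda>z. Vfun N u v (fst z) (snd z)) \<in> borel_measurable (RN N \<Otimes>\<^sub>M RN N)"
  unfolding Vfun_Ssum using meas_Ssum by measurable

lemma meas_Vfun1: "(\<lambda>L2. Vfun N u v L1 L2) \<in> borel_measurable (RN N)"
  unfolding Vfun_Ssum Ssum_def by measurable

lemma Vfun_split:
  assumes "1 \<le> N"
  shows "Vfun N u v L1 L2 = Vfun N 0 v L1 L2 * exp (- u * ln (Ssum N L1 L2))"
proof -
  have S: "0 < Ssum N L1 L2" by (rule Ssum_pos[OF assms])
  show ?thesis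
    unfolding Vfun_Ssum using S
    by (simp add: powr_def algebra_simps flip: exp_add)
qed

lemma iter_pair:
  fixes f :: "'a \<times> 'b \<Rightarrow> real"
  assumes s1: "sigma_finite_measure M1" and s2: "sigma_finite_measure M2"
    and fm: "f \<in> borel_measurable (M1 \<Otimes>\<^sub>M M2)" and f0: "\<And>z. 0 \<le> f z"
    and fin: "(\<integral>\<^sup>+x. (\<integral>\<^sup>+y. ennreal (f (x, y)) \<partial>M2) \<partial>M1) < \<infinity>"
  shows "(\<integral>x. (\<integral>y. f (x, y) \<partial>M2) \<partial>M1) = (\<integral>z. f z \<partial>(M1 \<Otimes>\<^sub>M M2))"
    and "integrable (M1 \<Otimes>\<^sub>M M2) f"
    and "(\<integral>\<^sup>+z. ennreal (f z) \<partial>(M1 \<Otimes>\<^sub>M M2)) < \<infinity>"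
proof -
  interpret M2: sigma_finite_measure M2 by (rule s2)
  interpret pair_sigma_finite M1 M2 using s1 s2 by (simp add: pair_sigma_finite_def)
  have eq: "(\<integral>\<^sup>+x. (\<integral>\<^sup>+y. ennreal (f (x, y)) \<partial>M2) \<partial>M1) = (\<integral>\<^sup>+z. ennreal (f z) \<partial>(M1 \<Otimes>\<^sub>M M2))"
    by (rule M2.nn_integral_fst) (use fm in measurable)
  show fin2: "(\<integral>\<^sup>+z. ennreal (f z) \<partial>(M1 \<Otimes>\<^sub>M M2)) < \<infinity>" using fin eq by simp
  show int: "integrable (M1 \<Otimes>\<^sub>M M2) f"
    by (rule integrableI_bounded) (use fm fin2 f0 in auto)
  show "(\<integral>x. (\<integral>y. f (x, y) \<partial>M2) \<partial>M1) = (\<integral>z. f z \<partial>(M1 \<Otimes>\<^sub>M M2))"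
    by (rule integral_fst'[OF int])
qed

lemma space_pos_AE_False:
  assumes "AE x in M. False" shows "emeasure M (space M) = 0"
proof -
  from assms obtain A where A: "{x \<in> space M. \<not> False} \<subseteq> A" "A \<in> sets M" "emeasure M A = 0"
    by (auto elim!: AE_E)
  then have "emeasure M (space M) \<le> emeasure M A" by (intro emeasure_mono) auto
  then show ?thesis using A by simp
qed

lemma integral_pos_everywhere:
  fixes f :: "'a \<Rightarrow> real"
  assumes int: "integrable M f" and pos: "\<And>x. 0 < f x" and sp: "emeasure M (space M) \<noteq> 0"
  shows "0 < (\<integral>x. f x \<partial>M)"
proof -
  have nn: "0 \<le> (\<integral>x. f x \<partial>M)" by (rule integral_nonneg_AE) (use pos in \<open>auto intro: less_imp_le\<close>)
  have "(\<integral>x. f x \<partial>M) \<noteq> 0"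
  proof
    assume "(\<integral>x. f x \<partial>M) = 0"
    then have "AE x in M. f x = 0"
      using integral_nonneg_eq_0_iff_AE[OF int] pos by (auto intro: less_imp_le)
    then have "AE x in M. False" using pos by (auto elim: AE_mp simp: less_le)
    then show False using sp space_pos_AE_False by blast
  qed
  with nn show ?thesis by simp
qed

lemma RN_space_pos: "emeasure (RN N) (space (RN N)) \<noteq> 0"
proof -
  interpret product_sigma_finite "\<lambda>_::nat. lborel :: real measure" by standard
  have "emeasure (RN N) (PiE {1..N} (\<lambda>_. {0..1::real})) = (\<Prod>i\<in>{1..N}. emeasure lborel {0..1::real})"
    unfolding RN_def by (rule emeasure_PiM) auto
  also have "\<dots> = 1" by simp
  finally have e1: "emeasure (RN N) (PiE {1..N} (\<lambda>_. {0..1::real})) = 1" .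
  have "emeasure (RN N) (PiE {1..N} (\<lambda>_. {0..1::real})) \<le> emeasure (RN N) (space (RN N))"
    by (rule emeasure_mono[OF _ sets.top]) (auto simp: space_RN)
  then show ?thesis using e1 by auto
qed

lemma RN2_space_pos: "emeasure (RN N \<Otimes>\<^sub>M M) (space (RN N \<Otimes>\<^sub>M M)) \<noteq> 0"
  if "sigma_finite_measure M" "emeasure M (space M) \<noteq> 0"
proof -
  interpret sigma_finite_measure M by (rule that(1))
  have "emeasure (RN N \<Otimes>\<^sub>M M) (space (RN N) \<times> space M) = emeasure (RN N) (space (RN N)) * emeasure M (space M)"
    by (rule emeasure_pair_measure_Times) auto
  then show ?thesis using RN_space_pos[of N] that(2) by (simp add: space_pair_measure)
qed

lemma dom_pos:
  fixes N :: nat and \<beta> :: "nat \<Rightarrow> real"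
  assumes "1 \<le> N" "- Min (\<beta> ` {1..N}) < u"
  shows "\<forall>k\<in>{1..N}. 0 < \<beta> k + u"
proof
  fix k assume "k \<in> {1..N}"
  then have "Min (\<beta> ` {1..N}) \<le> \<beta> k" by (intro Min_le finite_imageI) auto
  then show "0 < \<beta> k + u" using assms(2) by linarith
qed

lemma lgrw_pos: "\<forall>k\<in>{1..N}. 0 < \<beta> k \<Longrightarrow> 0 < lgrw_dens N \<beta> L"
  unfolding lgrw_dens_def lg_incr_dens_def by (intro prod_pos) (auto simp: Gamma_real_pos)

lemma Vfun_pos: "1 \<le> N \<Longrightarrow> 0 < Vfun N u v L1 L2"
  unfolding Vfun_Ssum using Ssum_pos[of N L1 L2] by simp

lemma meas_lnS1: "(\<lambda>L2. ln (Ssum N L1 L2)) \<in> borel_measurable (RN N)"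
  unfolding Ssum_def by measurable

lemma meas_lnS2: "(\<lambda>z. ln (Ssum N (fst z) (snd z))) \<in> borel_measurable (RN N \<Otimes>\<^sub>M RN N)"
  using meas_Ssum by measurable

lemma cra_A:
  fixes N :: nat and \<beta> :: "nat \<Rightarrow> real"
  assumes N: "1 \<le> N" and pos: "\<forall>k\<in>{1..N}. 0 < \<beta> k" and vv: "\<forall>k\<in>{1..N}. 0 < \<beta> k + v"
    and x: "- Min (\<beta> ` {1..N}) < x"
  shows "cra (\<lambda>u. \<integral>L2. Vfun N u v L1 L2 * lgrw_dens N \<beta> L1 * lgrw_dens N \<beta> L2 \<partial>RN N) x"
proof -
  have eq: "(\<lambda>u. \<integral>L2. Vfun N u v L1 L2 * lgrw_dens N \<beta> L1 * lgrw_dens N \<beta> L2 \<partial>RN N)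
     = (\<lambda>u. \<integral>L2. (Vfun N 0 v L1 L2 * lgrw_dens N \<beta> L1 * lgrw_dens N \<beta> L2) * exp (- u * ln (Ssum N L1 L2)) \<partial>RN N)"
    apply (intro ext Bochner_Integration.integral_cong refl)
    subgoal for u L2 by (simp only: Vfun_split[OF N, of u] mult_ac)
    done
  show ?thesis unfolding eq
  proof (rule cra_expfam[where c = "- Min (\<beta> ` {1..N})" and d = "x + 1"])
    show "(\<lambda>L2. Vfun N 0 v L1 L2 * lgrw_dens N \<beta> L1 * lgrw_dens N \<beta> L2) \<in> borel_measurable (RN N)"
      by (intro borel_measurable_times meas_Vfun1 meas_lgrw borel_measurable_const)
    show "(\<lambda>L2. ln (Ssum N L1 L2)) \<in> borel_measurable (RN N)" by (rule meas_lnS1)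
    show "0 \<le> Vfun N 0 v L1 L2 * lgrw_dens N \<beta> L1 * lgrw_dens N \<beta> L2" for L2
      using Vfun_pos[OF N] lgrw_nonneg[OF pos] by (simp add: less_imp_le)
    show "(\<integral>\<^sup>+L2. ennreal (Vfun N 0 v L1 L2 * lgrw_dens N \<beta> L1 * lgrw_dens N \<beta> L2 * exp (- u * ln (Ssum N L1 L2))) \<partial>RN N) < \<infinity>"
      if "- Min (\<beta> ` {1..N}) < u" "u < x + 1" for u
    proof -
      have uu: "\<forall>k\<in>{1..N}. 0 < \<beta> k + u" by (rule dom_pos[OF N that(1)])
      have "(\<integral>\<^sup>+L2. ennreal (Vfun N 0 v L1 L2 * lgrw_dens N \<beta> L1 * lgrw_dens N \<beta> L2 * exp (- u * ln (Ssum N L1 L2))) \<partial>RN N)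
          = (\<integral>\<^sup>+L2. ennreal (Vfun N u v L1 L2 * lgrw_dens N \<beta> L1 * lgrw_dens N \<beta> L2) \<partial>RN N)"
        by (rule nn_integral_cong) (simp only: Vfun_split[OF N, of u] mult_ac)
      also have "\<dots> < \<infinity>" by (rule Bfin(2)[OF N pos uu vv])
      finally show ?thesis .
    qed
  qed (use x in auto)
qed

lemma cra_B:
  fixes N :: nat and \<beta> :: "nat \<Rightarrow> real"
  assumes N: "1 \<le> N" and pos: "\<forall>k\<in>{1..N}. 0 < \<beta> k" and vv: "\<forall>k\<in>{1..N}. 0 < \<beta> k + v"
    and x: "- Min (\<beta> ` {1..N}) < x"
  shows "cra (\<lambda>u. statLG_norm N \<beta> u v) x" and "0 < statLG_norm N \<beta> x v"
proof -
  define m where "m = Min (\<beta> ` {1..N})"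
  define h where "h z = Vfun N 0 v (fst z) (snd z) * lgrw_dens N \<beta> (fst z) * lgrw_dens N \<beta> (snd z)" for z
  define a where "a z = ln (Ssum N (fst z) (snd z))" for z
  have hm: "h \<in> borel_measurable (RN N \<Otimes>\<^sub>M RN N)" unfolding h_def using meas_Vfun by measurable
  have am: "a \<in> borel_measurable (RN N \<Otimes>\<^sub>M RN N)" unfolding a_def by (rule meas_lnS2)
  have h0: "0 \<le> h z" for z
    unfolding h_def using Vfun_pos[OF N] lgrw_nonneg[OF pos] by (simp add: less_imp_le)
  have key: "statLG_norm N \<beta> u v = (\<integral>z. h z * exp (- u * a z) \<partial>(RN N \<Otimes>\<^sub>M RN N))"
      "integrable (RN N \<Otimes>\<^sub>M RN N) (\<lambda>z. h z * exp (- u * a z))"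
      "(\<integral>\<^sup>+z. ennreal (h z * exp (- u * a z)) \<partial>(RN N \<Otimes>\<^sub>M RN N)) < \<infinity>"
    if u: "- m < u" for u
  proof -
    have uu: "\<forall>k\<in>{1..N}. 0 < \<beta> k + u" by (rule dom_pos[OF N u[unfolded m_def]])
    have fe: "h z * exp (- u * a z) = Vfun N u v (fst z) (snd z) * lgrw_dens N \<beta> (fst z) * lgrw_dens N \<beta> (snd z)" for z
      unfolding h_def a_def by (simp only: Vfun_split[OF N, of u] mult_ac)
    have fm: "(\<lambda>z. h z * exp (- u * a z)) \<in> borel_measurable (RN N \<Otimes>\<^sub>M RN N)" using hm am by measurable
    have f0: "0 \<le> h z * exp (- u * a z)" for z using h0[of z] by simp
    have fin: "(\<integral>\<^sup>+x. (\<integral>\<^sup>+y. ennreal (h (x, y) * exp (- u * a (x, y))) \<partial>RN N) \<partial>RN N) < \<infinity>"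
      unfolding fe using Bfin(1)[OF N pos uu vv] by simp
    note ip = iter_pair[OF sigma_finite_RN sigma_finite_RN fm f0 fin]
    have "statLG_norm N \<beta> u v = (\<integral>x. (\<integral>y. h (x, y) * exp (- u * a (x, y)) \<partial>RN N) \<partial>RN N)"
      unfolding statLG_norm_def fe by simp
    then show "statLG_norm N \<beta> u v = (\<integral>z. h z * exp (- u * a z) \<partial>(RN N \<Otimes>\<^sub>M RN N))"
      using ip(1) by simp
    show "integrable (RN N \<Otimes>\<^sub>M RN N) (\<lambda>z. h z * exp (- u * a z))" by (rule ip(2))
    show "(\<integral>\<^sup>+z. ennreal (h z * exp (- u * a z)) \<partial>(RN N \<Otimes>\<^sub>M RN N)) < \<infinity>" by (rule ip(3))
  qed
  have xm: "- m < x" using x by (simp add: m_def)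
  have c: "cra (\<lambda>u. \<integral>z. h z * exp (- u * a z) \<partial>(RN N \<Otimes>\<^sub>M RN N)) x"
    by (rule cra_expfam[OF hm am h0, of "- m" "x + 1"]) (use key(3) xm in auto)
  show "cra (\<lambda>u. statLG_norm N \<beta> u v) x"
    by (rule cra_cong[OF c, of "x + m"]) (use xm key(1) in auto)
  show "0 < statLG_norm N \<beta> x v"
    unfolding key(1)[OF xm]
  proof (rule integral_pos_everywhere[OF key(2)[OF xm]])
    show "0 < h z * exp (- x * a z)" for z
      unfolding h_def using Vfun_pos[OF N] lgrw_pos[OF pos] by simp
    show "emeasure (RN N \<Otimes>\<^sub>M RN N) (space (RN N \<Otimes>\<^sub>M RN N)) \<noteq> 0"
      by (rule RN2_space_pos[OF sigma_finite_RN RN_space_pos])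
  qed
qed

lemma tau1_props:
  fixes N :: nat and \<beta> :: "nat \<Rightarrow> real"
  assumes N: "1 \<le> N"
  shows "\<And>k. k \<in> {1..N} \<Longrightarrow> tau1 N \<beta> k \<in> \<beta> ` {1..N}"
    and "Min (\<beta> ` {1..N}) \<le> Min (tau1 N \<beta> ` {1..N})"
proof -
  show im: "tau1 N \<beta> k \<in> \<beta> ` {1..N}" if "k \<in> {1..N}" for k
  proof (cases "k < N")
    case True then show ?thesis using that by (auto simp: tau1_def intro!: image_eqI[of _ _ "k + 1"])
  next
    case False then show ?thesis using that N by (auto simp: tau1_def intro!: image_eqI[of _ _ 1])
  qed
  have "Min (tau1 N \<beta> ` {1..N}) \<in> tau1 N \<beta> ` {1..N}" using N by (intro Min_in) auto
  then obtain k where k: "k \<in> {1..N}" "Min (tau1 N \<beta> ` {1..N}) = tau1 N \<beta> k" by auto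
  show "Min (\<beta> ` {1..N}) \<le> Min (tau1 N \<beta> ` {1..N})"
    unfolding k(2) using im[OF k(1)] by (intro Min_le) auto
qed

lemma second_fun:
  fixes N :: nat and \<beta> :: "nat \<Rightarrow> real"
  assumes N: "1 \<le> N" and pos: "\<forall>k\<in>{1..N}. 0 < \<beta> k" and vv: "\<forall>k\<in>{1..N}. 0 < \<beta> k + v"
  shows "real_analytic_on (\<lambda>u. statLG_marg N (tau1 N \<beta>) u v L') {- Min (\<beta> ` {1..N})<..}"
proof (rule cra_real_analytic)
  fix x assume "x \<in> {- Min (\<beta> ` {1..N})<..}"
  then have x: "- Min (\<beta> ` {1..N}) < x" by simp
  define \<beta>' where "\<beta>' = tau1 N \<beta>"
  have pv: "0 < \<beta>' k \<and> 0 < \<beta>' k + v" if k: "k \<in> {1..N}" for k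
  proof -
    from tau1_props(1)[OF N k, of \<beta>] obtain j where j: "j \<in> {1..N}" "\<beta>' k = \<beta> j"
      unfolding \<beta>'_def by auto
    then show ?thesis using pos vv by auto
  qed
  have pos': "\<forall>k\<in>{1..N}. 0 < \<beta>' k" and vv': "\<forall>k\<in>{1..N}. 0 < \<beta>' k + v"
    using pv by auto
  have x': "- Min (\<beta>' ` {1..N}) < x" using tau1_props(2)[OF N, of \<beta>] x unfolding \<beta>'_def by linarith
  have "cra (\<lambda>u. (\<integral>L2. Vfun N u v L' L2 * lgrw_dens N \<beta>' L' * lgrw_dens N \<beta>' L2 \<partial>RN N) / statLG_norm N \<beta>' u v) x"
    by (rule cra_divide[OF cra_A[OF N pos' vv' x'] cra_B(1)[OF N pos' vv' x']])
       (use cra_B(2)[OF N pos' vv' x'] in simp)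
  then show "cra (\<lambda>u. statLG_marg N (tau1 N \<beta>) u v L') x"
    unfolding statLG_marg_def \<beta>'_def .
qed

lemma ig_factor_bound:
  fixes \<theta> x :: real assumes "0 < \<theta>"
  shows "0 \<le> invgamma_dens \<theta> x * x" "invgamma_dens \<theta> x * x \<le> \<theta> powr \<theta> * exp (- \<theta>) / Gamma \<theta>"
proof -
  have G: "0 < Gamma \<theta>" using assms by (simp add: Gamma_real_pos)
  show "0 \<le> invgamma_dens \<theta> x * x" using G by (simp add: invgamma_dens_def)
  show "invgamma_dens \<theta> x * x \<le> \<theta> powr \<theta> * exp (- \<theta>) / Gamma \<theta>"
  proof (cases "0 < x")
    case False
    then show ?thesis using G by (simp add: invgamma_dens_def)
  next
    case True
    have e1: "x powr (- \<theta> - 1) * x = (1 / x) powr \<theta>"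
    proof -
      have "x powr (- \<theta> - 1) * x = x powr (- \<theta> - 1) * x powr 1" using True by simp
      also have "\<dots> = x powr (- \<theta>)" by (subst powr_add[symmetric]) simp
      also have "\<dots> = inverse (x powr \<theta>)" by (rule powr_minus)
      also have "\<dots> = 1 / x powr \<theta>" by (simp add: divide_inverse)
      also have "(1 / x) powr \<theta> = 1 / x powr \<theta>" using True by (simp add: powr_divide)
      then have "1 / x powr \<theta> = (1 / x) powr \<theta>" by simp
      finally show ?thesis .
    qed
    have "invgamma_dens \<theta> x * x = (1 / x) powr \<theta> * exp (- (1 / x)) / Gamma \<theta>"
      using True by (simp add: invgamma_dens_def e1[symmetric] field_simps)
    also have "\<dots> \<le> \<theta> powr \<theta> * exp (- \<theta>) / Gamma \<theta>"
      using G True assms by (intro divide_right_mono powr_exp_bound) auto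
    finally show ?thesis .
  qed
qed

lemma ig_split:
  fixes b u w :: real
  shows "invgamma_dens (b + u) w = rGamma (b + u) * ((if 0 < w then w powr (- b - 1) * exp (- 1 / w) else 0) * exp (- u * ln w))"
proof (cases "0 < w")
  case True
  have "w powr (- (b + u) - 1) = w powr (- b - 1) * w powr (- u)"
    by (simp add: powr_add[symmetric] algebra_simps)
  also have "w powr (- u) = exp (- u * ln w)" using True by (simp add: powr_def)
  finally show ?thesis using True
    by (simp add: invgamma_dens_def rGamma_inverse_Gamma divide_inverse mult_ac)
qed (simp add: invgamma_dens_def)

lemma meas_invgamma[measurable]: "invgamma_dens \<theta> \<in> borel_measurable borel"
  unfolding invgamma_dens_def by measurable

definition g0 :: "real \<Rightarrow> real \<Rightarrow> real" where
  "g0 b w = (if 0 < w then w powr (- b - 1) * exp (- 1 / w) else 0)"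

definition Kp :: "nat \<Rightarrow> (nat \<Rightarrow> real) \<Rightarrow> real \<Rightarrow> (nat \<Rightarrow> real) \<Rightarrow> real \<Rightarrow> (nat \<Rightarrow> real) \<Rightarrow> real" where
  "Kp N \<beta> v L' w L = (\<Prod>j=1..N. invgamma_dens (U_theta N \<beta> v j) (exp (L' j) / U_c N L' L w j) * (exp (L' j) / U_c N L' L w j))"

definition Psi :: "nat \<Rightarrow> (nat \<Rightarrow> real) \<Rightarrow> real \<Rightarrow> (nat \<Rightarrow> real) \<Rightarrow> real \<Rightarrow> (nat \<Rightarrow> real) \<Rightarrow> real \<Rightarrow> (nat \<Rightarrow> real) \<Rightarrow> real" where
  "Psi N \<beta> v L' u L w L2 = (g0 (\<beta> 1) w * exp (- u * ln w) * Kp N \<beta> v L' w L) * (Vfun N u v L L2 * lgrw_dens N \<beta> L * lgrw_dens N \<beta> L2)"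

lemma meas_g0[measurable]: "g0 b \<in> borel_measurable borel"
  unfolding g0_def by measurable

lemma meas_Uc: "(\<lambda>z. U_c N L' (fst z) (snd z) j) \<in> borel_measurable (RN N \<Otimes>\<^sub>M lborel)"
  unfolding U_c_def by measurable

lemma meas_Kp: "(\<lambda>z. Kp N \<beta> v L' (snd z) (fst z)) \<in> borel_measurable (RN N \<Otimes>\<^sub>M lborel)"
  unfolding Kp_def
  by (intro borel_measurable_prod borel_measurable_times measurable_compose[OF _ meas_invgamma]
        borel_measurable_divide meas_Uc borel_measurable_const)

lemma meas_Psi3: "(\<lambda>z. Psi N \<beta> v L' u (fst z) (fst (snd z)) (snd (snd z))) \<in> borel_measurable (RN N \<Otimes>\<^sub>M (lborel \<Otimes>\<^sub>M RN N))"
proof -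
  have p1: "(\<lambda>z. (fst z, fst (snd z))) \<in> measurable (RN N \<Otimes>\<^sub>M (lborel \<Otimes>\<^sub>M RN N)) (RN N \<Otimes>\<^sub>M lborel)"
    by measurable
  have p2: "(\<lambda>z. (fst z, snd (snd z))) \<in> measurable (RN N \<Otimes>\<^sub>M (lborel \<Otimes>\<^sub>M RN N)) (RN N \<Otimes>\<^sub>M RN N)"
    by measurable
  have k: "(\<lambda>z. Kp N \<beta> v L' (fst (snd z)) (fst z)) \<in> borel_measurable (RN N \<Otimes>\<^sub>M (lborel \<Otimes>\<^sub>M RN N))"
    using measurable_compose[OF p1 meas_Kp] by simp
  have vf: "(\<lambda>z. Vfun N u v (fst z) (snd (snd z))) \<in> borel_measurable (RN N \<Otimes>\<^sub>M (lborel \<Otimes>\<^sub>M RN N))"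
    using measurable_compose[OF p2 meas_Vfun] by simp
  have l1: "(\<lambda>z. lgrw_dens N \<beta> (fst z)) \<in> borel_measurable (RN N \<Otimes>\<^sub>M (lborel \<Otimes>\<^sub>M RN N))"
    by (rule measurable_compose[OF measurable_fst meas_lgrw])
  have l2: "(\<lambda>z. lgrw_dens N \<beta> (snd (snd z))) \<in> borel_measurable (RN N \<Otimes>\<^sub>M (lborel \<Otimes>\<^sub>M RN N))"
    by (rule measurable_compose[OF _ meas_lgrw]) measurable
  have w: "(\<lambda>z. fst (snd z)) \<in> borel_measurable (RN N \<Otimes>\<^sub>M (lborel \<Otimes>\<^sub>M RN N))"
    by measurable
  have e: "(\<lambda>z. exp (- u * ln (fst (snd z)))) \<in> borel_measurable (RN N \<Otimes>\<^sub>M (lborel \<Otimes>\<^sub>M RN N))"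
    using w by measurable
  show ?thesis unfolding Psi_def
    by (intro borel_measurable_times k vf l1 l2 measurable_compose[OF w meas_g0] e)
qed

lemma meas_Psi2: "(\<lambda>p. Psi N \<beta> v L' u L (fst p) (snd p)) \<in> borel_measurable (lborel \<Otimes>\<^sub>M RN N)"
proof -
  have k0: "(\<lambda>w. Kp N \<beta> v L' w L) \<in> borel_measurable borel"
    unfolding Kp_def U_c_def by measurable
  have k: "(\<lambda>p. Kp N \<beta> v L' (fst p) L) \<in> borel_measurable (lborel \<Otimes>\<^sub>M RN N)"
    using measurable_compose[OF measurable_fst[of lborel "RN N"] k0[folded measurable_lborel2]] by simp
  have vf: "(\<lambda>p. Vfun N u v L (snd p)) \<in> borel_measurable (lborel \<Otimes>\<^sub>M RN N)"
    by (rule measurable_compose[OF measurable_snd meas_Vfun1])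
  have l2: "(\<lambda>p. lgrw_dens N \<beta> (snd p)) \<in> borel_measurable (lborel \<Otimes>\<^sub>M RN N)"
    by (rule measurable_compose[OF measurable_snd meas_lgrw])
  have w: "(\<lambda>p. fst p) \<in> borel_measurable (lborel \<Otimes>\<^sub>M RN N)"
    using measurable_fst[of lborel "RN N"] by simp
  have e: "(\<lambda>p. exp (- u * ln (fst p))) \<in> borel_measurable (lborel \<Otimes>\<^sub>M RN N)"
    using w by measurable
  show ?thesis unfolding Psi_def
    by (intro borel_measurable_times k vf l2 measurable_compose[OF w meas_g0] e borel_measurable_const)
qed

lemma theta_pos:
  assumes N: "1 \<le> N" and pos: "\<forall>k\<in>{1..N}. 0 < \<beta> k" and vv: "\<forall>k\<in>{1..N}. 0 < \<beta> k + v"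
    and j: "j \<in> {1..N}"
  shows "0 < U_theta N \<beta> v j"
proof -
  have b1: "0 < \<beta> 1" "0 < \<beta> 1 + v" using pos vv N by auto
  show ?thesis
  proof (cases "j < N")
    case True
    then have "0 < \<beta> (j + 1)" using pos j by auto
    then show ?thesis using True b1 by (simp add: U_theta_def)
  next
    case False then show ?thesis using b1 by (simp add: U_theta_def)
  qed
qed

definition CKc :: "nat \<Rightarrow> (nat \<Rightarrow> real) \<Rightarrow> real \<Rightarrow> real" where
  "CKc N \<beta> v = (\<Prod>j=1..N. U_theta N \<beta> v j powr U_theta N \<beta> v j * exp (- U_theta N \<beta> v j) / Gamma (U_theta N \<beta> v j))"

lemma Kp_bounds:
  assumes N: "1 \<le> N" and pos: "\<forall>k\<in>{1..N}. 0 < \<beta> k" and vv: "\<forall>k\<in>{1..N}. 0 < \<beta> k + v"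
  shows "0 \<le> Kp N \<beta> v L' w L" "Kp N \<beta> v L' w L \<le> CKc N \<beta> v"
proof -
  have tp: "0 < U_theta N \<beta> v j" if "j \<in> {1..N}" for j by (rule theta_pos[OF N pos vv that])
  show "0 \<le> Kp N \<beta> v L' w L" unfolding Kp_def
    by (intro prod_nonneg ig_factor_bound(1) tp)
  show "Kp N \<beta> v L' w L \<le> CKc N \<beta> v" unfolding Kp_def CKc_def
    by (intro prod_mono conjI ig_factor_bound tp)
qed

lemma CKc_nonneg:
  assumes N: "1 \<le> N" and pos: "\<forall>k\<in>{1..N}. 0 < \<beta> k" and vv: "\<forall>k\<in>{1..N}. 0 < \<beta> k + v"
  shows "0 \<le> CKc N \<beta> v"
  using Kp_bounds[OF N pos vv] by (meson order_trans)

lemma g0_exp: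
  "g0 b w * exp (- u * ln w) = (if 0 < w then w powr (- (b + u) - 1) * exp (- 1 / w) else 0)"
proof (cases "0 < w")
  case True
  have "w powr (- (b + u) - 1) = w powr (- b - 1) * w powr (- u)"
    by (simp add: powr_add[symmetric] algebra_simps)
  also have "w powr (- u) = exp (- u * ln w)" using True by (simp add: powr_def)
  finally show ?thesis using True by (simp add: g0_def mult_ac)
qed (simp add: g0_def)

lemma g0_nonneg: "0 \<le> g0 b w"
  by (simp add: g0_def)

lemma F1_ident:
  "(\<integral>L. U_trans N \<beta> u v L' L * statLG_marg N \<beta> u v L \<partial>RN N)
   = rGamma (\<beta> 1 + u) / statLG_norm N \<beta> u v * (\<integral>L. (\<integral>w. (\<integral>L2. Psi N \<beta> v L' u L w L2 \<partial>RN N) \<partial>lborel) \<partial>RN N)"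
proof -
  have U: "U_trans N \<beta> u v L' L = rGamma (\<beta> 1 + u) * (\<integral>w. g0 (\<beta> 1) w * exp (- u * ln w) * Kp N \<beta> v L' w L \<partial>lborel)" for L
  proof -
    have "U_trans N \<beta> u v L' L = (\<integral>w. invgamma_dens (\<beta> 1 + u) w * Kp N \<beta> v L' w L \<partial>lborel)"
      unfolding U_trans_def Kp_def ..
    also have "\<dots> = (\<integral>w. rGamma (\<beta> 1 + u) * (g0 (\<beta> 1) w * exp (- u * ln w) * Kp N \<beta> v L' w L) \<partial>lborel)"
      by (simp only: ig_split g0_def[symmetric] mult.assoc)
    also have "\<dots> = rGamma (\<beta> 1 + u) * (\<integral>w. g0 (\<beta> 1) w * exp (- u * ln w) * Kp N \<beta> v L' w L \<partial>lborel)"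
      by (rule integral_mult_right_zero)
    finally show ?thesis .
  qed
  have pw: "U_trans N \<beta> u v L' L * statLG_marg N \<beta> u v L
      = rGamma (\<beta> 1 + u) / statLG_norm N \<beta> u v * (\<integral>w. (\<integral>L2. Psi N \<beta> v L' u L w L2 \<partial>RN N) \<partial>lborel)" for L
  proof -
    define I where "I = (\<integral>w. g0 (\<beta> 1) w * exp (- u * ln w) * Kp N \<beta> v L' w L \<partial>lborel)"
    define A where "A = (\<integral>L2. Vfun N u v L L2 * lgrw_dens N \<beta> L * lgrw_dens N \<beta> L2 \<partial>RN N)"
    have "U_trans N \<beta> u v L' L * statLG_marg N \<beta> u v L = rGamma (\<beta> 1 + u) / statLG_norm N \<beta> u v * (I * A)"
      unfolding U statLG_marg_def I_def[symmetric] A_def[symmetric] by simp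
    also have "I * A = (\<integral>w. g0 (\<beta> 1) w * exp (- u * ln w) * Kp N \<beta> v L' w L * A \<partial>lborel)"
      unfolding I_def by (rule integral_mult_left_zero[symmetric])
    also have "\<dots> = (\<integral>w. (\<integral>L2. Psi N \<beta> v L' u L w L2 \<partial>RN N) \<partial>lborel)"
      unfolding A_def Psi_def by (simp only: integral_mult_right_zero)
    finally show ?thesis .
  qed
  show ?thesis
    by (simp only: pw integral_mult_right_zero)
qed

lemma Psi_nonneg:
  assumes N: "1 \<le> N" and pos: "\<forall>k\<in>{1..N}. 0 < \<beta> k" and vv: "\<forall>k\<in>{1..N}. 0 < \<beta> k + v"
  shows "0 \<le> Psi N \<beta> v L' u L w L2"
  unfolding Psi_def
  using Kp_bounds(1)[OF N pos vv] g0_nonneg Vfun_pos[OF N] lgrw_nonneg[OF pos]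
  by (intro mult_nonneg_nonneg) (auto intro: less_imp_le)

lemma Psi_bound:
  assumes N: "1 \<le> N" and pos: "\<forall>k\<in>{1..N}. 0 < \<beta> k" and vv: "\<forall>k\<in>{1..N}. 0 < \<beta> k + v"
  shows "Psi N \<beta> v L' u L w L2 \<le> (CKc N \<beta> v * (g0 (\<beta> 1) w * exp (- u * ln w))) * (Vfun N u v L L2 * lgrw_dens N \<beta> L * lgrw_dens N \<beta> L2)"
proof -
  have VV: "0 \<le> Vfun N u v L L2 * lgrw_dens N \<beta> L * lgrw_dens N \<beta> L2"
    using Vfun_pos[OF N] lgrw_nonneg[OF pos] by (intro mult_nonneg_nonneg) (auto intro: less_imp_le)
  have ge: "0 \<le> g0 (\<beta> 1) w * exp (- u * ln w)" using g0_nonneg by simp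
  have "g0 (\<beta> 1) w * exp (- u * ln w) * Kp N \<beta> v L' w L \<le> CKc N \<beta> v * (g0 (\<beta> 1) w * exp (- u * ln w))"
  proof -
    have "Kp N \<beta> v L' w L * (g0 (\<beta> 1) w * exp (- u * ln w)) \<le> CKc N \<beta> v * (g0 (\<beta> 1) w * exp (- u * ln w))"
      by (rule mult_right_mono[OF Kp_bounds(2)[OF N pos vv] ge])
    then show ?thesis by (simp only: mult.commute[of "g0 (\<beta> 1) w * exp (- u * ln w)" "Kp N \<beta> v L' w L"])
  qed
  then show ?thesis unfolding Psi_def using VV by (rule mult_right_mono)
qed

lemma Psi_split:
  assumes N: "1 \<le> N"
  shows "Psi N \<beta> v L' u L w L2 = Psi N \<beta> v L' 0 L w L2 * exp (- u * (ln w + ln (Ssum N L L2)))"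
  unfolding Psi_def Vfun_split[OF N, of u]
  by (simp add: algebra_simps flip: exp_add)

lemma nn_fin:
  fixes N :: nat and \<beta> :: "nat \<Rightarrow> real"
  assumes N: "1 \<le> N" and pos: "\<forall>k\<in>{1..N}. 0 < \<beta> k" and vv: "\<forall>k\<in>{1..N}. 0 < \<beta> k + v"
    and u: "- Min (\<beta> ` {1..N}) < u"
  shows "(\<integral>\<^sup>+w. (\<integral>\<^sup>+L2. ennreal (Psi N \<beta> v L' u L w L2) \<partial>RN N) \<partial>lborel) < \<infinity>"
    and "(\<integral>\<^sup>+L. (\<integral>\<^sup>+w. (\<integral>\<^sup>+L2. ennreal (Psi N \<beta> v L' u L w L2) \<partial>RN N) \<partial>lborel) \<partial>RN N) < \<infinity>"
proof -
  have uu: "\<forall>k\<in>{1..N}. 0 < \<beta> k + u" by (rule dom_pos[OF N u])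
  have th: "0 < \<beta> 1 + u" using uu N by auto
  define C where "C = CKc N \<beta> v"
  have C0: "0 \<le> C" unfolding C_def by (rule CKc_nonneg[OF N pos vv])
  define gu where "gu w = g0 (\<beta> 1) w * exp (- u * ln w)" for w
  have gu0: "0 \<le> gu w" for w unfolding gu_def using g0_nonneg by simp
  have gum: "gu \<in> borel_measurable borel" unfolding gu_def by measurable
  define G where "G = (\<integral>\<^sup>+w. ennreal (gu w) \<partial>lborel)"
  have Gfin: "G < \<infinity>" unfolding G_def gu_def g0_exp using winv_fin[OF th] by simp
  define VV where "VV L L2 = Vfun N u v L L2 * lgrw_dens N \<beta> L * lgrw_dens N \<beta> L2" for L L2
  have VV0: "0 \<le> VV L L2" for L L2
    unfolding VV_def using Vfun_pos[OF N] lgrw_nonneg[OF pos] by (intro mult_nonneg_nonneg) (auto intro: less_imp_le)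
  have VVm: "(\<lambda>L2. ennreal (VV L L2)) \<in> borel_measurable (RN N)" for L
    unfolding VV_def by (intro measurable_compose[OF _ measurable_ennreal] borel_measurable_times meas_Vfun1 meas_lgrw borel_measurable_const)
  define J where "J L = (\<integral>\<^sup>+L2. ennreal (VV L L2) \<partial>RN N)" for L
  have VV2m: "(\<lambda>z. ennreal (VV (fst z) (snd z))) \<in> borel_measurable (RN N \<Otimes>\<^sub>M RN N)"
  proof -
    have l1: "(\<lambda>z. lgrw_dens N \<beta> (fst z)) \<in> borel_measurable (RN N \<Otimes>\<^sub>M RN N)"
      by (rule measurable_compose[OF measurable_fst meas_lgrw])
    have l2: "(\<lambda>z. lgrw_dens N \<beta> (snd z)) \<in> borel_measurable (RN N \<Otimes>\<^sub>M RN N)"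
      by (rule measurable_compose[OF measurable_snd meas_lgrw])
    show ?thesis unfolding VV_def
      by (intro measurable_compose[OF _ measurable_ennreal] borel_measurable_times meas_Vfun l1 l2)
  qed
  have Jm: "J \<in> borel_measurable (RN N)"
    unfolding J_def using sigma_finite_measure.borel_measurable_nn_integral_fst[OF sigma_finite_RN VV2m] by simp
  have Jfin: "J L < \<infinity>" for L unfolding J_def VV_def by (rule Bfin(2)[OF N pos uu vv])
  have JJfin: "(\<integral>\<^sup>+L. J L \<partial>RN N) < \<infinity>" unfolding J_def VV_def by (rule Bfin(1)[OF N pos uu vv])
  have step1: "(\<integral>\<^sup>+L2. ennreal (Psi N \<beta> v L' u L w L2) \<partial>RN N) \<le> ennreal (C * gu w) * J L" for L w
  proof -
    have "(\<integral>\<^sup>+L2. ennreal (Psi N \<beta> v L' u L w L2) \<partial>RN N) \<le> (\<integral>\<^sup>+L2. ennreal (C * gu w) * ennreal (VV L L2) \<partial>RN N)"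
    proof (rule nn_integral_mono)
      fix L2
      have "ennreal (Psi N \<beta> v L' u L w L2) \<le> ennreal (C * gu w * VV L L2)"
        using Psi_bound[OF N pos vv, of L' u L w L2] unfolding C_def gu_def VV_def by (rule ennreal_leI)
      also have "\<dots> = ennreal (C * gu w) * ennreal (VV L L2)"
        using C0 gu0 VV0 by (intro ennreal_mult) auto
      finally show "ennreal (Psi N \<beta> v L' u L w L2) \<le> ennreal (C * gu w) * ennreal (VV L L2)" .
    qed
    also have "\<dots> = ennreal (C * gu w) * J L"
      unfolding J_def by (rule nn_integral_cmult[OF VVm])
    finally show ?thesis .
  qed
  have step2: "(\<integral>\<^sup>+w. (\<integral>\<^sup>+L2. ennreal (Psi N \<beta> v L' u L w L2) \<partial>RN N) \<partial>lborel) \<le> ennreal C * G * J L" for L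
  proof -
    have "(\<integral>\<^sup>+w. (\<integral>\<^sup>+L2. ennreal (Psi N \<beta> v L' u L w L2) \<partial>RN N) \<partial>lborel) \<le> (\<integral>\<^sup>+w. ennreal (C * gu w) * J L \<partial>lborel)"
      by (rule nn_integral_mono) (rule step1)
    also have "\<dots> = (\<integral>\<^sup>+w. ennreal C * ennreal (gu w) \<partial>lborel) * J L"
      using C0 gu0 by (subst nn_integral_multc) (use gum in \<open>simp_all add: ennreal_mult\<close>)
    also have "(\<integral>\<^sup>+w. ennreal C * ennreal (gu w) \<partial>lborel) = ennreal C * G"
      unfolding G_def by (rule nn_integral_cmult) (use gum in simp)
    finally show ?thesis .
  qed
  show "(\<integral>\<^sup>+w. (\<integral>\<^sup>+L2. ennreal (Psi N \<beta> v L' u L w L2) \<partial>RN N) \<partial>lborel) < \<infinity>"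
    using step2[of L] Gfin Jfin[of L] by (simp add: ennreal_mult_less_top order_le_less_trans)
  have "(\<integral>\<^sup>+L. (\<integral>\<^sup>+w. (\<integral>\<^sup>+L2. ennreal (Psi N \<beta> v L' u L w L2) \<partial>RN N) \<partial>lborel) \<partial>RN N)
      \<le> (\<integral>\<^sup>+L. ennreal C * G * J L \<partial>RN N)"
    by (rule nn_integral_mono) (rule step2)
  also have "\<dots> = ennreal C * G * (\<integral>\<^sup>+L. J L \<partial>RN N)"
    by (rule nn_integral_cmult[OF Jm])
  also have "\<dots> < \<infinity>" using Gfin JJfin by (simp add: ennreal_mult_less_top)
  finally show "(\<integral>\<^sup>+L. (\<integral>\<^sup>+w. (\<integral>\<^sup>+L2. ennreal (Psi N \<beta> v L' u L w L2) \<partial>RN N) \<partial>lborel) \<partial>RN N) < \<infinity>" .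
qed

lemma sf_lborel: "sigma_finite_measure (lborel :: real measure)"
  by (rule lborel.sigma_finite_measure_axioms)

lemma first_fun:
  fixes N :: nat and \<beta> :: "nat \<Rightarrow> real"
  assumes N: "1 \<le> N" and pos: "\<forall>k\<in>{1..N}. 0 < \<beta> k" and vv: "\<forall>k\<in>{1..N}. 0 < \<beta> k + v"
  shows "real_analytic_on (\<lambda>u. \<integral>L. U_trans N \<beta> u v L' L * statLG_marg N \<beta> u v L \<partial>RN N) {- Min (\<beta> ` {1..N})<..}"
proof (rule cra_real_analytic)
  fix x assume "x \<in> {- Min (\<beta> ` {1..N})<..}"
  define m where "m = Min (\<beta> ` {1..N})"
  have x: "- m < x" using \<open>x \<in> _\<close> by (simp add: m_def)
  define M3 where "M3 = RN N \<Otimes>\<^sub>M ((lborel :: real measure) \<Otimes>\<^sub>M RN N)"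
  define hT where "hT z = Psi N \<beta> v L' 0 (fst z) (fst (snd z)) (snd (snd z))" for z :: "(nat \<Rightarrow> real) \<times> real \<times> (nat \<Rightarrow> real)"
  define aT where "aT z = ln (fst (snd z)) + ln (Ssum N (fst z) (snd (snd z)))" for z :: "(nat \<Rightarrow> real) \<times> real \<times> (nat \<Rightarrow> real)"
  have hTm: "hT \<in> borel_measurable M3" unfolding hT_def M3_def by (rule meas_Psi3)
  have aTm: "aT \<in> borel_measurable M3"
  proof -
    have p2: "(\<lambda>z. (fst z, snd (snd z))) \<in> measurable (RN N \<Otimes>\<^sub>M (lborel \<Otimes>\<^sub>M RN N)) (RN N \<Otimes>\<^sub>M RN N)"
      by measurable
    have s: "(\<lambda>z. Ssum N (fst z) (snd (snd z))) \<in> borel_measurable (RN N \<Otimes>\<^sub>M (lborel \<Otimes>\<^sub>M RN N))"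
      using measurable_compose[OF p2 meas_Ssum] by simp
    have w: "(\<lambda>z. fst (snd z)) \<in> borel_measurable (RN N \<Otimes>\<^sub>M (lborel \<Otimes>\<^sub>M RN N))"
      by measurable
    show ?thesis unfolding aT_def M3_def
      by (intro borel_measurable_add borel_measurable_ln s w)
  qed
  have hT0: "0 \<le> hT z" for z unfolding hT_def by (rule Psi_nonneg[OF N pos vv])
  have sp: "sigma_finite_measure ((lborel :: real measure) \<Otimes>\<^sub>M RN N)"
    by (rule sigma_finite_pair_measure[OF sf_lborel sigma_finite_RN])
  have key: "(\<integral>L. (\<integral>w. (\<integral>L2. Psi N \<beta> v L' u L w L2 \<partial>RN N) \<partial>lborel) \<partial>RN N) = (\<integral>z. hT z * exp (- u * aT z) \<partial>M3)"
      "(\<integral>\<^sup>+z. ennreal (hT z * exp (- u * aT z)) \<partial>M3) < \<infinity>"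
    if u: "- m < u" for u
  proof -
    have u': "- Min (\<beta> ` {1..N}) < u" using u by (simp add: m_def)
    have fe: "Psi N \<beta> v L' u (fst z) (fst (snd z)) (snd (snd z)) = hT z * exp (- u * aT z)" for z
      unfolding hT_def aT_def by (rule Psi_split[OF N])
    have inner: "(\<integral>w. (\<integral>L2. Psi N \<beta> v L' u L w L2 \<partial>RN N) \<partial>lborel)
        = (\<integral>p. Psi N \<beta> v L' u L (fst p) (snd p) \<partial>(lborel \<Otimes>\<^sub>M RN N))" for L
    proof -
      have fin1: "(\<integral>\<^sup>+x. (\<integral>\<^sup>+y. ennreal (Psi N \<beta> v L' u L (fst (x, y)) (snd (x, y))) \<partial>RN N) \<partial>lborel) < \<infinity>"
        using nn_fin(1)[OF N pos vv u', of L' L] by simp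
      have "(\<integral>x. (\<integral>y. Psi N \<beta> v L' u L (fst (x, y)) (snd (x, y)) \<partial>RN N) \<partial>lborel)
          = (\<integral>p. Psi N \<beta> v L' u L (fst p) (snd p) \<partial>(lborel \<Otimes>\<^sub>M RN N))"
        by (rule iter_pair(1)[OF sf_lborel sigma_finite_RN meas_Psi2 Psi_nonneg[OF N pos vv] fin1])
      then show ?thesis by simp
    qed
    have nnin: "(\<integral>\<^sup>+p. ennreal (Psi N \<beta> v L' u L (fst p) (snd p)) \<partial>(lborel \<Otimes>\<^sub>M RN N))
        = (\<integral>\<^sup>+w. (\<integral>\<^sup>+L2. ennreal (Psi N \<beta> v L' u L w L2) \<partial>RN N) \<partial>lborel)" for L
    proof -
      have m2: "(\<lambda>p. ennreal (Psi N \<beta> v L' u L (fst p) (snd p))) \<in> borel_measurable (lborel \<Otimes>\<^sub>M RN N)"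
        using meas_Psi2 by (rule measurable_compose[OF _ measurable_ennreal])
      show ?thesis
        using sigma_finite_measure.nn_integral_fst[OF sigma_finite_RN m2] by simp
    qed
    have fin2: "(\<integral>\<^sup>+x. (\<integral>\<^sup>+y. ennreal (Psi N \<beta> v L' u (fst (x, y)) (fst (snd (x, y))) (snd (snd (x, y)))) \<partial>(lborel \<Otimes>\<^sub>M RN N)) \<partial>RN N) < \<infinity>"
      using nn_fin(2)[OF N pos vv u', of L'] by (simp add: nnin)
    note ip = iter_pair[OF sigma_finite_RN sp meas_Psi3 Psi_nonneg[OF N pos vv] fin2]
    have "(\<integral>L. (\<integral>w. (\<integral>L2. Psi N \<beta> v L' u L w L2 \<partial>RN N) \<partial>lborel) \<partial>RN N)
        = (\<integral>x. (\<integral>y. Psi N \<beta> v L' u (fst (x, y)) (fst (snd (x, y))) (snd (snd (x, y))) \<partial>(lborel \<Otimes>\<^sub>M RN N)) \<partial>RN N)"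
      by (simp add: inner)
    also have "\<dots> = (\<integral>z. Psi N \<beta> v L' u (fst z) (fst (snd z)) (snd (snd z)) \<partial>(RN N \<Otimes>\<^sub>M (lborel \<Otimes>\<^sub>M RN N)))"
      by (rule ip(1))
    also have "\<dots> = (\<integral>z. hT z * exp (- u * aT z) \<partial>M3)"
      unfolding M3_def fe ..
    finally show "(\<integral>L. (\<integral>w. (\<integral>L2. Psi N \<beta> v L' u L w L2 \<partial>RN N) \<partial>lborel) \<partial>RN N) = (\<integral>z. hT z * exp (- u * aT z) \<partial>M3)" .
    show "(\<integral>\<^sup>+z. ennreal (hT z * exp (- u * aT z)) \<partial>M3) < \<infinity>"
      using ip(3) unfolding M3_def fe .
  qed
  have cT: "cra (\<lambda>u. \<integral>z. hT z * exp (- u * aT z) \<partial>M3) x"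
    by (rule cra_expfam[OF hTm aTm hT0, of "- m" "x + 1"]) (use key(2) x in auto)
  have x': "- Min (\<beta> ` {1..N}) < x" using x by (simp add: m_def)
  have c: "cra (\<lambda>u. rGamma (\<beta> 1 + u) * (\<integral>z. hT z * exp (- u * aT z) \<partial>M3) / statLG_norm N \<beta> u v) x"
    by (rule cra_divide[OF cra_mult[OF cra_rGamma cT] cra_B(1)[OF N pos vv x']])
       (use cra_B(2)[OF N pos vv x'] in simp)
  show "cra (\<lambda>u. \<integral>L. U_trans N \<beta> u v L' L * statLG_marg N \<beta> u v L \<partial>RN N) x"
  proof (rule cra_cong[OF c, of "x + m"])
    show "0 < x + m" using x by simp
    fix y assume "\<bar>y - x\<bar> < x + m"
    then have y: "- m < y" by linarith
    show "(\<integral>L. U_trans N \<beta> y v L' L * statLG_marg N \<beta> y v L \<partial>RN N)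
        = rGamma (\<beta> 1 + y) * (\<integral>z. hT z * exp (- y * aT z) \<partial>M3) / statLG_norm N \<beta> y v"
      unfolding F1_ident key(1)[OF y] by simp
  qed
qed

theorem proposition3p16:
  fixes N :: nat and \<beta> :: "nat \<Rightarrow> real" and v :: real and L' :: "nat \<Rightarrow> real"
  assumes "N \<ge> 1"
    and "\<forall>i\<in>{1..N}. \<beta> i > 0"
    and "\<forall>i\<in>{1..N}. \<beta> i + v > 0"
  shows "real_analytic_on
           (\<lambda>u. \<integral>L. U_trans N \<beta> u v L' L * statLG_marg N \<beta> u v L \<partial>RN N)
           {- Min (\<beta> ` {1..N})<..}
       \<and> real_analytic_on (\<lambda>u. statLG_marg N (tau1 N \<beta>) u v L')
           {- Min (\<beta> ` {1..N})<..}"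
  using first_fun[OF assms] second_fun[OF assms] by blast

end
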